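(* Let $P\in\mathcal{P}$ and $t\in[0,T]$. Then $$E_P[\alpha_t^T(P)]=\sup_{X\in L^1_G(\Omega_T)}E_P\big[E_P[X\mid\mathcal{F}_t]-\tilde{\mathbb{E}}_t[X]\big]$$ and $$\alpha_0^T(P)=\alpha_0^t(P)+E_P[\alpha_t^T(P)].$$
   Context: Fix $T>0$, $d\ge1$. $\Omega_T=C_0([0,T];\mathbb{R}^d)$, $B$ the canonical process, $\mathcal{F}_t=\sigma(B_s:s\le t)$. $(\hat{\mathbb{E}},(\hat{\mathbb{E}}_t))$ is the $G$-expectation for a monotone sublinear $G$, $\mathcal{P}$ the weakly compact convex set of probability measures with $\hat{\mathbb{E}}[X]=\sup_{P\in\mathcal{P}}E_P[X]$. $(\tilde{\mathbb{E}},(\tilde{\mathbb{E}}_t))$ is the consistent convex $\tilde G$-expectation associated to $\tilde G:\mathbb{S}_d\to\mathbb{R}$ with $\tilde G(0)=0$, monotone, convex, $\tilde G(A_1)-\tilde G(A_2)\le G(A_1-A_2)$; it is dominated by $\hat{\mathbb{E}}_t$ and consistent ($\tilde{\mathbb{E}}[\tilde{\mathbb{E}}_t[X]]=\tilde{\mathbb{E}}[X]$). $L^1_G(\Omega_t)$ is the completion of bounded Lipschitz cylinder functionals of $(B_s)_{s\le t}$ under $\hat{\mathbb{E}}[|\cdot|]$. Definitions: $\alpha_0^t(P):=\sup_{Y\in L^1_G(\Omega_t)}(E_P[Y]-\tilde{\mathbb{E}}[Y])$; $\alpha_t^T(P):=\operatorname{ess\,sup}^P_{Y\in L^1_G(\Omega_T)}(E_P[Y\mid\mathcal{F}_t]-\tilde{\mathbb{E}}_t[Y])$,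 $P$-a.s. *)

theory Defs
  imports "HOL-Probability.Probability"
begin

(* Path space C_0([0,T];R^d): paths are functions real => 'd, continuous on [0,T],
   starting at 0, and normalised to be constant outside [0,T]. *)
definition paths :: "real \<Rightarrow> (real \<Rightarrow> 'd::euclidean_space) set" where
  "paths T = {\<omega>. continuous_on {0..T} \<omega> \<and> \<omega> 0 = 0 \<and>
                (\<forall>s<0. \<omega> s = 0) \<and> (\<forall>s>T. \<omega> s = \<omega> T)}"

(* F_t = sigma(B_s : 0 <= s <= t) on Omega_T, B the canonical process *)
definition filt :: "real \<Rightarrow> real \<Rightarrow> (real \<Rightarrow> 'd::euclidean_space) measure" where
  "filt T t = sigma (paths T)
     {{\<omega> \<in> paths T. \<omega> s \<in> U} | s U. s \<in> {0..t} \<and> open U}"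

definition lip_cyl :: "real \<Rightarrow> real \<Rightarrow> ((real \<Rightarrow> 'd::euclidean_space) \<Rightarrow> real) \<Rightarrow> bool" where
  "lip_cyl T t X \<longleftrightarrow> (\<exists>(ts::real list) (\<phi>::'d list \<Rightarrow> real) L C.
      set ts \<subseteq> {0..t} \<and> (\<forall>xs. \<bar>\<phi> xs\<bar> \<le> C) \<and>
      (\<forall>xs ys. length xs = length ts \<longrightarrow> length ys = length ts \<longrightarrow>
          \<bar>\<phi> xs - \<phi> ys\<bar> \<le> L * (\<Sum>i<length ts. norm (xs ! i - ys ! i))) \<and>
      (\<forall>\<omega>\<in>paths T. X \<omega> = \<phi> (map \<omega> ts)))"

definition Ehat :: "'a measure set \<Rightarrow> ('a \<Rightarrow> real) \<Rightarrow> ereal" where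
  "Ehat Pset X = (SUP P\<in>Pset. ereal (\<integral>\<omega>. X \<omega> \<partial>P))"

definition Ehat_abs :: "'a measure set \<Rightarrow> ('a \<Rightarrow> real) \<Rightarrow> ennreal" where
  "Ehat_abs Pset X = (SUP P\<in>Pset. \<integral>\<^sup>+\<omega>. ennreal \<bar>X \<omega>\<bar> \<partial>P)"

definition L1G :: "(real \<Rightarrow> 'd::euclidean_space) measure set \<Rightarrow> real \<Rightarrow> real
                    \<Rightarrow> ((real \<Rightarrow> 'd) \<Rightarrow> real) set" where
  "L1G Pset T t = {X. X \<in> borel_measurable (filt T t) \<and>
      (\<exists>Xn. (\<forall>n. lip_cyl T t (Xn n)) \<and>
            ((\<lambda>n. Ehat_abs Pset (\<lambda>\<omega>. X \<omega> - Xn n \<omega>)) \<longlongrightarrow> 0) sequentially)}"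

definition qs :: "'a measure set \<Rightarrow> ('a \<Rightarrow> bool) \<Rightarrow> bool" where
  "qs Pset \<Phi> \<longleftrightarrow> (\<forall>P\<in>Pset. AE \<omega> in P. \<Phi> \<omega>)"

definition is_ess_sup :: "'a measure \<Rightarrow> ('a \<Rightarrow> ereal) set \<Rightarrow> ('a \<Rightarrow> ereal) \<Rightarrow> bool" where
  "is_ess_sup M F Z \<longleftrightarrow> Z \<in> borel_measurable M \<and> (\<forall>f\<in>F. AE x in M. f x \<le> Z x) \<and>
     (\<forall>Z'\<in>borel_measurable M. (\<forall>f\<in>F. AE x in M. f x \<le> Z' x) \<longrightarrow> (AE x in M. Z x \<le> Z' x))"

definition ess_sup_fam :: "'a measure \<Rightarrow> ('a \<Rightarrow> ereal) set \<Rightarrow> ('a \<Rightarrow> ereal)" where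
  "ess_sup_fam M F = (SOME Z. is_ess_sup M F Z)"

definition alpha0 :: "(real \<Rightarrow> 'd::euclidean_space) measure set \<Rightarrow> real
      \<Rightarrow> (((real \<Rightarrow> 'd) \<Rightarrow> real) \<Rightarrow> real) \<Rightarrow> real \<Rightarrow> (real \<Rightarrow> 'd) measure \<Rightarrow> ereal" where
  "alpha0 Pset T Etil t P = (SUP Y\<in>L1G Pset T t. ereal ((\<integral>\<omega>. Y \<omega> \<partial>P) - Etil Y))"

definition alphaT :: "(real \<Rightarrow> 'd::euclidean_space) measure set \<Rightarrow> real
      \<Rightarrow> (real \<Rightarrow> ((real \<Rightarrow> 'd) \<Rightarrow> real) \<Rightarrow> (real \<Rightarrow> 'd) \<Rightarrow> real) \<Rightarrow> real
      \<Rightarrow> (real \<Rightarrow> 'd) measure \<Rightarrow> (real \<Rightarrow> 'd) \<Rightarrow> ereal" where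
  "alphaT Pset T Et t P = ess_sup_fam (restr_to_subalg P (filt T t))
     {(\<lambda>\<omega>. ereal (real_cond_exp P (filt T t) Y \<omega> - Et t Y \<omega>)) | Y. Y \<in> L1G Pset T T}"

(* E_P of a [0,\<infinity>]-valued (a.s. nonnegative) extended-real random variable *)
definition exp_ereal :: "'a measure \<Rightarrow> ('a \<Rightarrow> ereal) \<Rightarrow> ereal" where
  "exp_ereal P Z = enn2ereal (\<integral>\<^sup>+\<omega>. e2ennreal (Z \<omega>) \<partial>P)"

end

theory Submission
  imports Defs
begin

definition LP :: "nat \<Rightarrow> ('d::euclidean_space list \<Rightarrow> real) \<Rightarrow> real \<Rightarrow> real \<Rightarrow> bool" where
  "LP n \<phi> L C \<longleftrightarrow> (\<forall>xs. \<bar>\<phi> xs\<bar> \<le> C) \<and>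
     (\<forall>xs ys. length xs = n \<longrightarrow> length ys = n \<longrightarrow>
          \<bar>\<phi> xs - \<phi> ys\<bar> \<le> L * (\<Sum>i<n. norm (xs ! i - ys ! i)))"

lemma lip_cyl_iff: "lip_cyl T t X \<longleftrightarrow> (\<exists>ts \<phi> L C. set ts \<subseteq> {0..t} \<and> LP (length ts) \<phi> L C \<and>
      (\<forall>\<omega>\<in>paths T. X \<omega> = \<phi> (map \<omega> ts)))"
  unfolding lip_cyl_def LP_def by blast

lemma LP_Cons:
  assumes "LP (Suc n) \<phi> L C"
  shows "LP n (\<lambda>xs. \<phi> (c # xs)) L C"
  unfolding LP_def
proof (intro conjI allI impI)
  fix xs show "\<bar>\<phi> (c # xs)\<bar> \<le> C" using assms unfolding LP_def by blast
next
  fix xs ys :: "'a list" assume l: "length xs = n" "length ys = n"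
  have "\<bar>\<phi> (c # xs) - \<phi> (c # ys)\<bar> \<le> L * (\<Sum>i<Suc n. norm ((c#xs) ! i - (c#ys) ! i))"
    using assms l unfolding LP_def by auto
  also have "(\<Sum>i<Suc n. norm ((c#xs) ! i - (c#ys) ! i)) = (\<Sum>i<n. norm (xs ! i - ys ! i))"
    by (subst sum.lessThan_Suc_shift) simp
  finally show "\<bar>\<phi> (c # xs) - \<phi> (c # ys)\<bar> \<le> L * (\<Sum>i<n. norm (xs ! i - ys ! i))" .
qed

lemma LP_head:
  assumes "LP (Suc n) \<phi> L C" "length r = n"
  shows "\<bar>\<phi> (x # r) - \<phi> (c # r)\<bar> \<le> \<bar>L\<bar> * norm (x - c)"
proof -
  have "\<bar>\<phi> (x # r) - \<phi> (c # r)\<bar> \<le> L * (\<Sum>i<Suc n. norm ((x#r) ! i - (c#r) ! i))"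
    using assms unfolding LP_def by auto
  also have "(\<Sum>i<Suc n. norm ((x#r) ! i - (c#r) ! i)) = norm (x - c)"
    by (subst sum.lessThan_Suc_shift) simp
  finally show ?thesis by (smt (verit) mult_right_mono norm_ge_zero)
qed

lemma inf_repr:
  fixes x :: "'d::euclidean_space"
  assumes lp: "LP (Suc n) \<phi> L C" and r: "length r = n"
    and D: "\<And>U. open U \<Longrightarrow> U \<noteq> {} \<Longrightarrow> \<exists>d\<in>D. d \<in> U"
  shows "\<phi> (x # r) = (INF c\<in>D. \<phi> (c # r) + \<bar>L\<bar> * norm (x - c))"
proof -
  have Dne: "D \<noteq> {}" using D[of UNIV] by auto
  have lb: "\<phi> (x # r) \<le> \<phi> (c # r) + \<bar>L\<bar> * norm (x - c)" for c
    using LP_head[OF lp r, of x c] by linarith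
  have bdd: "bdd_below ((\<lambda>c. \<phi> (c # r) + \<bar>L\<bar> * norm (x - c)) ` D)"
    by (rule bdd_belowI2[of _ "\<phi> (x # r)"]) (rule lb)
  have "(INF c\<in>D. \<phi> (c # r) + \<bar>L\<bar> * norm (x - c)) \<le> \<phi> (x # r) + e" if e: "e > 0" for e
  proof -
    obtain d where d: "d \<in> D" "d \<in> ball x (e / (2 * \<bar>L\<bar> + 1))"
    proof -
      have "e / (2 * \<bar>L\<bar> + 1) > 0" using e by (simp add: add_pos_nonneg)
      then have "ball x (e / (2 * \<bar>L\<bar> + 1)) \<noteq> {}" by simp
      then show ?thesis using D[of "ball x (e / (2 * \<bar>L\<bar> + 1))"] that by auto
    qed
    have nd: "norm (x - d) < e / (2 * \<bar>L\<bar> + 1)" using d(2) by (simp add: dist_norm)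
    have "\<bar>L\<bar> * norm (x - d) \<le> \<bar>L\<bar> * (e / (2 * \<bar>L\<bar> + 1))"
      using nd by (intro mult_left_mono) auto
    also have "\<dots> \<le> e / 2"
      using e by (simp add: field_simps)
    finally have h1: "\<bar>L\<bar> * norm (x - d) \<le> e / 2" .
    have "\<phi> (d # r) \<le> \<phi> (x # r) + \<bar>L\<bar> * norm (x - d)"
      using LP_head[OF lp r, of x d] by linarith
    then have "\<phi> (d # r) + \<bar>L\<bar> * norm (x - d) \<le> \<phi> (x # r) + e" using h1 by linarith
    moreover have "(INF c\<in>D. \<phi> (c # r) + \<bar>L\<bar> * norm (x - c)) \<le> \<phi> (d # r) + \<bar>L\<bar> * norm (x - d)"
      using bdd d(1) by (rule cINF_lower)
    ultimately show ?thesis by linarith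
  qed
  then have "(INF c\<in>D. \<phi> (c # r) + \<bar>L\<bar> * norm (x - c)) \<le> \<phi> (x # r)"
    by (rule field_le_epsilon)
  moreover have "\<phi> (x # r) \<le> (INF c\<in>D. \<phi> (c # r) + \<bar>L\<bar> * norm (x - c))"
    using Dne lb by (intro cINF_greatest) auto
  ultimately show ?thesis by linarith
qed

lemma LP_meas:
  fixes ts :: "real list" and \<phi> :: "'d::euclidean_space list \<Rightarrow> real"
  assumes "LP (length ts) \<phi> L C" "\<And>s. s \<in> set ts \<Longrightarrow> (\<lambda>\<omega>. \<omega> s) \<in> borel_measurable M"
  shows "(\<lambda>\<omega>. \<phi> (map \<omega> ts)) \<in> borel_measurable M"
  using assms
proof (induction ts arbitrary: \<phi>)
  case Nil then show ?case by simp
next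
  case (Cons s ts)
  obtain D :: "'d set" where D: "countable D" "\<And>U. open U \<Longrightarrow> U \<noteq> {} \<Longrightarrow> \<exists>d\<in>D. d \<in> U"
    using countable_dense_exists by blast
  have IH: "(\<lambda>\<omega>. \<phi> (c # map \<omega> ts)) \<in> borel_measurable M" for c
    using Cons.IH[of "\<lambda>xs. \<phi> (c # xs)"] LP_Cons[of "length ts" \<phi> L C c] Cons.prems by auto
  have sm[measurable]: "(\<lambda>\<omega>. \<omega> s) \<in> borel_measurable M" using Cons.prems by auto
  have eq: "\<phi> (map \<omega> (s # ts)) = (INF c\<in>D. \<phi> (c # map \<omega> ts) + \<bar>L\<bar> * norm (\<omega> s - c))" for \<omega>
    using inf_repr[of "length ts" \<phi> L C "map \<omega> ts" D "\<omega> s"] Cons.prems D by auto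
  show ?case unfolding eq
    by (rule borel_measurable_cINF_real) (use D(1) IH in auto)
qed

lemma LP_lipD: "LP n \<phi> L C \<Longrightarrow> length xs = n \<Longrightarrow> length ys = n \<Longrightarrow>
   \<bar>\<phi> xs - \<phi> ys\<bar> \<le> L * (\<Sum>i<n. norm (xs ! i - ys ! i))"
  unfolding LP_def by blast

lemma LP_lipD': "LP n \<phi> L C \<Longrightarrow> length xs = n \<Longrightarrow> length ys = n \<Longrightarrow>
   \<bar>\<phi> xs - \<phi> ys\<bar> \<le> \<bar>L\<bar> * (\<Sum>i<n. norm (xs ! i - ys ! i))"
  using LP_lipD[of n \<phi> L C xs ys] mult_right_mono[OF abs_ge_self, of "(\<Sum>i<n. norm (xs ! i - ys ! i))" L]
  by (smt (verit) norm_ge_zero sum_nonneg)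

lemma LP_bdD: "LP n \<phi> L C \<Longrightarrow> \<bar>\<phi> xs\<bar> \<le> C"
  unfolding LP_def by blast

lemma sum_split_nat: "(\<Sum>i<a+(b::nat). f i) = (\<Sum>i<a. f i) + (\<Sum>i<b. f (a+i)::real)"
  by (induction b) (auto simp: add.assoc)

lemma LP_comb:
  fixes op :: "real \<Rightarrow> real \<Rightarrow> real"
  assumes l1: "LP n1 \<phi>1 L1 C1" and l2: "LP n2 \<phi>2 L2 C2" and K: "K \<ge> 0"
    and op_lip: "\<And>a b a' b'. \<bar>a\<bar> \<le> C1 \<Longrightarrow> \<bar>a'\<bar> \<le> C1 \<Longrightarrow> \<bar>b\<bar> \<le> C2 \<Longrightarrow> \<bar>b'\<bar> \<le> C2 \<Longrightarrow>
        \<bar>op a b - op a' b'\<bar> \<le> K * (\<bar>a - a'\<bar> + \<bar>b - b'\<bar>)"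
    and op_bd: "\<And>a b. \<bar>a\<bar> \<le> C1 \<Longrightarrow> \<bar>b\<bar> \<le> C2 \<Longrightarrow> \<bar>op a b\<bar> \<le> D"
  shows "LP (n1 + n2) (\<lambda>xs. op (\<phi>1 (take n1 xs)) (\<phi>2 (drop n1 xs))) (K * (\<bar>L1\<bar> + \<bar>L2\<bar>)) D"
  unfolding LP_def
proof (intro conjI allI impI)
  fix xs :: "'a list"
  show "\<bar>op (\<phi>1 (take n1 xs)) (\<phi>2 (drop n1 xs))\<bar> \<le> D"
    using l1 l2 unfolding LP_def by (intro op_bd) auto
next
  fix xs ys :: "'a list" assume xs: "length xs = n1 + n2" and ys: "length ys = n1 + n2"
  define S1 where "S1 = (\<Sum>i<n1. norm (xs ! i - ys ! i))"
  define S2 where "S2 = (\<Sum>i<n2. norm (xs ! (n1 + i) - ys ! (n1 + i)))"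
  have S1: "S1 \<ge> 0" "S2 \<ge> 0" unfolding S1_def S2_def by (auto intro: sum_nonneg)
  have a: "\<bar>\<phi>1 (take n1 xs) - \<phi>1 (take n1 ys)\<bar> \<le> \<bar>L1\<bar> * S1"
  proof -
    have "\<bar>\<phi>1 (take n1 xs) - \<phi>1 (take n1 ys)\<bar> \<le> \<bar>L1\<bar> * (\<Sum>i<n1. norm (take n1 xs ! i - take n1 ys ! i))"
      using xs ys by (intro LP_lipD'[OF l1]) auto
    also have "(\<Sum>i<n1. norm (take n1 xs ! i - take n1 ys ! i)) = S1"
      unfolding S1_def by (intro sum.cong) auto
    finally show ?thesis .
  qed
  have b: "\<bar>\<phi>2 (drop n1 xs) - \<phi>2 (drop n1 ys)\<bar> \<le> \<bar>L2\<bar> * S2"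
  proof -
    have "\<bar>\<phi>2 (drop n1 xs) - \<phi>2 (drop n1 ys)\<bar> \<le> \<bar>L2\<bar> * (\<Sum>i<n2. norm (drop n1 xs ! i - drop n1 ys ! i))"
      using xs ys by (intro LP_lipD'[OF l2]) auto
    also have "(\<Sum>i<n2. norm (drop n1 xs ! i - drop n1 ys ! i)) = S2"
      unfolding S2_def using xs ys by (intro sum.cong) auto
    finally show ?thesis .
  qed
  have "\<bar>op (\<phi>1 (take n1 xs)) (\<phi>2 (drop n1 xs)) - op (\<phi>1 (take n1 ys)) (\<phi>2 (drop n1 ys))\<bar>
      \<le> K * (\<bar>\<phi>1 (take n1 xs) - \<phi>1 (take n1 ys)\<bar> + \<bar>\<phi>2 (drop n1 xs) - \<phi>2 (drop n1 ys)\<bar>)"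
    using l1 l2 unfolding LP_def by (intro op_lip) auto
  also have "\<dots> \<le> K * (\<bar>L1\<bar> * S1 + \<bar>L2\<bar> * S2)"
    using a b K by (intro mult_left_mono) auto
  also have "\<dots> \<le> K * ((\<bar>L1\<bar> + \<bar>L2\<bar>) * (S1 + S2))"
    using S1 K by (intro mult_left_mono) (auto simp: algebra_simps)
  also have "S1 + S2 = (\<Sum>i<n1+n2. norm (xs ! i - ys ! i))"
    unfolding S1_def S2_def by (rule sum_split_nat[symmetric])
  finally show "\<bar>op (\<phi>1 (take n1 xs)) (\<phi>2 (drop n1 xs)) - op (\<phi>1 (take n1 ys)) (\<phi>2 (drop n1 ys))\<bar>
      \<le> K * (\<bar>L1\<bar> + \<bar>L2\<bar>) * (\<Sum>i<n1+n2. norm (xs ! i - ys ! i))" by (simp add: mult.assoc)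
qed

lemma LP_unary:
  fixes g :: "real \<Rightarrow> real"
  assumes l: "LP n \<phi> L C" and K: "K \<ge> 0"
    and g_lip: "\<And>a b. \<bar>a\<bar> \<le> C \<Longrightarrow> \<bar>b\<bar> \<le> C \<Longrightarrow> \<bar>g a - g b\<bar> \<le> K * \<bar>a - b\<bar>"
    and g_bd: "\<And>a. \<bar>a\<bar> \<le> C \<Longrightarrow> \<bar>g a\<bar> \<le> D"
  shows "LP n (\<lambda>xs. g (\<phi> xs)) (K * \<bar>L\<bar>) D"
  unfolding LP_def
proof (intro conjI allI impI)
  fix xs show "\<bar>g (\<phi> xs)\<bar> \<le> D" using l g_bd unfolding LP_def by auto
next
  fix xs ys :: "'a list" assume xs: "length xs = n" and ys: "length ys = n"
  have S: "(\<Sum>i<n. norm (xs ! i - ys ! i)) \<ge> 0" by (auto intro: sum_nonneg)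
  have "\<bar>g (\<phi> xs) - g (\<phi> ys)\<bar> \<le> K * \<bar>\<phi> xs - \<phi> ys\<bar>" using l g_lip unfolding LP_def by auto
  also have "\<dots> \<le> K * (\<bar>L\<bar> * (\<Sum>i<n. norm (xs ! i - ys ! i)))"
    using LP_lipD'[OF l xs ys] K by (intro mult_left_mono) auto
  finally show "\<bar>g (\<phi> xs) - g (\<phi> ys)\<bar> \<le> K * \<bar>L\<bar> * (\<Sum>i<n. norm (xs ! i - ys ! i))"
    by (simp add: mult.assoc)
qed

lemma LP_C_nonneg: "LP n \<phi> L C \<Longrightarrow> C \<ge> 0"
  unfolding LP_def by (meson abs_ge_zero order_trans)

lemma LP_add:
  assumes "LP n1 \<phi>1 L1 C1" "LP n2 \<phi>2 L2 C2"
  shows "LP (n1 + n2) (\<lambda>xs. \<phi>1 (take n1 xs) + \<phi>2 (drop n1 xs)) (1 * (\<bar>L1\<bar> + \<bar>L2\<bar>)) (C1 + C2)"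
  by (rule LP_comb[OF assms, where op = "(+)"]) auto

lemma LP_mult:
  assumes l1: "LP n1 \<phi>1 L1 C1" and l2: "LP n2 \<phi>2 L2 C2"
  shows "LP (n1 + n2) (\<lambda>xs. \<phi>1 (take n1 xs) * \<phi>2 (drop n1 xs)) ((C1 + C2) * (\<bar>L1\<bar> + \<bar>L2\<bar>)) (C1 * C2)"
proof (rule LP_comb[OF assms, where op = "(*)"])
  have C: "C1 \<ge> 0" "C2 \<ge> 0" using LP_C_nonneg l1 l2 by auto
  then show "C1 + C2 \<ge> 0" by simp
  fix a b a' b' :: real
  assume h: "\<bar>a\<bar> \<le> C1" "\<bar>a'\<bar> \<le> C1" "\<bar>b\<bar> \<le> C2" "\<bar>b'\<bar> \<le> C2"
  have "\<bar>a * b - a' * b'\<bar> = \<bar>a * (b - b') + b' * (a - a')\<bar>" by (simp add: algebra_simps)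
  also have "\<dots> \<le> \<bar>a\<bar> * \<bar>b - b'\<bar> + \<bar>b'\<bar> * \<bar>a - a'\<bar>" by (metis abs_mult abs_triangle_ineq)
  also have "\<dots> \<le> C1 * \<bar>b - b'\<bar> + C2 * \<bar>a - a'\<bar>"
    using h by (intro add_mono mult_right_mono) auto
  also have "\<dots> \<le> (C1 + C2) * (\<bar>a - a'\<bar> + \<bar>b - b'\<bar>)" using C by (simp add: algebra_simps)
  finally show "\<bar>a * b - a' * b'\<bar> \<le> (C1 + C2) * (\<bar>a - a'\<bar> + \<bar>b - b'\<bar>)" .
next
  fix a b :: real assume h: "\<bar>a\<bar> \<le> C1" "\<bar>b\<bar> \<le> C2"
  then show "\<bar>a * b\<bar> \<le> C1 * C2" by (simp add: abs_mult mult_mono')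
qed

lemma LP_const: "LP 0 (\<lambda>_. c) 0 \<bar>c\<bar>"
  unfolding LP_def by simp


definition gen :: "real \<Rightarrow> real \<Rightarrow> (real \<Rightarrow> 'd::euclidean_space) set set" where
  "gen T t = {{\<omega> \<in> paths T. \<omega> s \<in> U} | s U. s \<in> {0..t} \<and> open U}"

lemma gen_Pow: "gen T t \<subseteq> Pow (paths T)" unfolding gen_def by auto

lemma filt_gen: "filt T t = sigma (paths T) (gen T t)" unfolding filt_def gen_def ..

lemma space_filt[simp]: "space (filt T t) = paths T"
  unfolding filt_gen by (simp add: space_measure_of_conv)

lemma sets_filt: "sets (filt T t) = sigma_sets (paths T) (gen T t)"
  unfolding filt_gen using gen_Pow by (rule sets_measure_of)

lemma filt_mono: "t \<le> s \<Longrightarrow> sets (filt T t) \<subseteq> sets (filt T s)"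
  unfolding sets_filt
  by (intro sigma_sets_mono') (unfold gen_def, fastforce)

lemma coord_meas: "s \<in> {0..t} \<Longrightarrow> (\<lambda>\<omega>::real \<Rightarrow> 'd::euclidean_space. \<omega> s) \<in> borel_measurable (filt T t)"
proof (rule borel_measurableI)
  fix U :: "'d set" assume "s \<in> {0..t}" "open U"
  then have "{\<omega> \<in> paths T. \<omega> s \<in> U} \<in> gen T t" unfolding gen_def by blast
  then have "{\<omega> \<in> paths T. \<omega> s \<in> U} \<in> sets (filt T t)" unfolding sets_filt by auto
  moreover have "(\<lambda>\<omega>. \<omega> s) -` U \<inter> space (filt T t) = {\<omega> \<in> paths T. \<omega> s \<in> U}" by auto
  ultimately show "(\<lambda>\<omega>. \<omega> s) -` U \<inter> space (filt T t) \<in> sets (filt T t)" by simp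
qed

lemma LC_meas:
  fixes \<phi> :: "'d::euclidean_space list \<Rightarrow> real"
  assumes "set ts \<subseteq> {0..t}" "LP (length ts) \<phi> L C"
  shows "(\<lambda>\<omega>::real\<Rightarrow>'d. \<phi> (map \<omega> ts)) \<in> borel_measurable (filt T t)"
  using assms by (intro LP_meas[of ts \<phi> L C]) (auto intro!: coord_meas)

lemma lip_cyl_meas:
  assumes "lip_cyl T t X"
  shows "X \<in> borel_measurable (filt T t)"
proof -
  obtain ts \<phi> L C where h: "set ts \<subseteq> {0..t}" "LP (length ts) \<phi> L C" "\<forall>\<omega>\<in>paths T. X \<omega> = \<phi> (map \<omega> ts)"
    using assms unfolding lip_cyl_iff by blast
  have "(\<lambda>\<omega>. \<phi> (map \<omega> ts)) \<in> borel_measurable (filt T t)" using LC_meas[OF h(1,2)] .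
  moreover have "X \<in> borel_measurable (filt T t) \<longleftrightarrow> (\<lambda>\<omega>. \<phi> (map \<omega> ts)) \<in> borel_measurable (filt T t)"
    by (rule measurable_cong) (simp add: h(3))
  ultimately show ?thesis by simp
qed

lemma lip_cyl_bdd:
  assumes "lip_cyl T t X"
  obtains C where "\<And>\<omega>. \<omega> \<in> paths T \<Longrightarrow> \<bar>X \<omega>\<bar> \<le> C"
proof -
  obtain ts \<phi> L C where h: "set ts \<subseteq> {0..t}" "LP (length ts) \<phi> L C" "\<forall>\<omega>\<in>paths T. X \<omega> = \<phi> (map \<omega> ts)"
    using assms unfolding lip_cyl_iff by blast
  show ?thesis using h by (intro that[of C]) (auto simp: LP_def)
qed

lemma lip_cyl_mono:
  assumes "t \<le> s" "lip_cyl T t X" shows "lip_cyl T s X"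
proof -
  obtain ts \<phi> L C where h: "set ts \<subseteq> {0..t}" "LP (length ts) \<phi> L C" "\<forall>\<omega>\<in>paths T. X \<omega> = \<phi> (map \<omega> ts)"
    using assms(2) unfolding lip_cyl_iff by blast
  have "set ts \<subseteq> {0..s}" using h(1) assms(1) by auto
  then show ?thesis unfolding lip_cyl_iff using h(2,3) by blast
qed

lemma lip_cyl_const: "t \<ge> 0 \<Longrightarrow> lip_cyl T t (\<lambda>_. c)"
  unfolding lip_cyl_iff using LP_const[of c] by (intro exI[of _ "[]"]) auto

lemma lip_cyl_binop:
  fixes X Y :: "(real \<Rightarrow> 'd::euclidean_space) \<Rightarrow> real"
  assumes x: "lip_cyl T t X" and y: "lip_cyl T t Y"
    and op: "\<And>n1 n2 (\<phi>1::'d list \<Rightarrow> real) (\<phi>2::'d list \<Rightarrow> real) L1 L2 C1 C2. LP n1 \<phi>1 L1 C1 \<Longrightarrow> LP n2 \<phi>2 L2 C2 \<Longrightarrow>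
        \<exists>L C. LP (n1 + n2) (\<lambda>xs. op (\<phi>1 (take n1 xs)) (\<phi>2 (drop n1 xs))) L C"
  shows "lip_cyl T t (\<lambda>\<omega>. op (X \<omega>) (Y \<omega>))"
proof -
  obtain ts1 \<phi>1 L1 C1 where h1: "set ts1 \<subseteq> {0..t}" "LP (length ts1) \<phi>1 L1 C1" "\<forall>\<omega>\<in>paths T. X \<omega> = \<phi>1 (map \<omega> ts1)"
    using x unfolding lip_cyl_iff by blast
  obtain ts2 \<phi>2 L2 C2 where h2: "set ts2 \<subseteq> {0..t}" "LP (length ts2) \<phi>2 L2 C2" "\<forall>\<omega>\<in>paths T. Y \<omega> = \<phi>2 (map \<omega> ts2)"
    using y unfolding lip_cyl_iff by blast
  obtain L C where l: "LP (length ts1 + length ts2) (\<lambda>xs. op (\<phi>1 (take (length ts1) xs)) (\<phi>2 (drop (length ts1) xs))) L C"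
    using op[OF h1(2) h2(2)] by blast
  show ?thesis unfolding lip_cyl_iff
    by (rule exI[of _ "ts1 @ ts2"], rule exI[of _ "\<lambda>xs. op (\<phi>1 (take (length ts1) xs)) (\<phi>2 (drop (length ts1) xs))"])
       (use h1 h2 l in auto)
qed

lemma lip_cyl_add: "lip_cyl T t X \<Longrightarrow> lip_cyl T t Y \<Longrightarrow> lip_cyl T t (\<lambda>\<omega>. X \<omega> + Y \<omega>)"
  by (rule lip_cyl_binop[where op="(+)"]) (use LP_add in blast)+

lemma lip_cyl_mult: "lip_cyl T t X \<Longrightarrow> lip_cyl T t Y \<Longrightarrow> lip_cyl T t (\<lambda>\<omega>. X \<omega> * Y \<omega>)"
  by (rule lip_cyl_binop[where op="(*)"]) (use LP_mult in blast)+

lemma lip_cyl_uminus: "t \<ge> 0 \<Longrightarrow> lip_cyl T t X \<Longrightarrow> lip_cyl T t (\<lambda>\<omega>. - X \<omega>)"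
  using lip_cyl_mult[OF lip_cyl_const[of t T "-1"], of X] by simp


lemma subalg_filt:
  assumes "sets Q = sets (filt T T)" "space Q = paths T" "s \<le> T"
  shows "subalgebra Q (filt T s)"
  unfolding subalgebra_def using assms filt_mono[OF assms(3), of T] by auto

lemma meas_Q:
  assumes "sets Q = sets (filt T T)" "space Q = paths T" "s \<le> T"
    and "X \<in> borel_measurable (filt T s)"
  shows "X \<in> borel_measurable Q"
  by (rule measurable_from_subalg[OF subalg_filt[OF assms(1-3)] assms(4)])

lemma Ehat_abs_le:
  assumes "\<And>Q. Q \<in> Pset \<Longrightarrow> (\<integral>\<^sup>+\<omega>. ennreal \<bar>f \<omega>\<bar> \<partial>Q) \<le> (\<integral>\<^sup>+\<omega>. ennreal \<bar>g \<omega>\<bar> \<partial>Q) + (\<integral>\<^sup>+\<omega>. ennreal \<bar>h \<omega>\<bar> \<partial>Q)"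
  shows "Ehat_abs Pset f \<le> Ehat_abs Pset g + Ehat_abs Pset h"
  unfolding Ehat_abs_def
proof (rule SUP_least)
  fix Q assume Q: "Q \<in> Pset"
  have "(\<integral>\<^sup>+\<omega>. ennreal \<bar>g \<omega>\<bar> \<partial>Q) + (\<integral>\<^sup>+\<omega>. ennreal \<bar>h \<omega>\<bar> \<partial>Q) \<le>
     (SUP Q\<in>Pset. \<integral>\<^sup>+\<omega>. ennreal \<bar>g \<omega>\<bar> \<partial>Q) + (SUP Q\<in>Pset. \<integral>\<^sup>+\<omega>. ennreal \<bar>h \<omega>\<bar> \<partial>Q)"
    using Q by (intro add_mono SUP_upper)
  then show "(\<integral>\<^sup>+\<omega>. ennreal \<bar>f \<omega>\<bar> \<partial>Q) \<le> (SUP Q\<in>Pset. \<integral>\<^sup>+\<omega>. ennreal \<bar>g \<omega>\<bar> \<partial>Q) + (SUP Q\<in>Pset. \<integral>\<^sup>+\<omega>. ennreal \<bar>h \<omega>\<bar> \<partial>Q)"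
    using assms[OF Q] by (rule order_trans[rotated])
qed

lemma nn_abs_add_le:
  assumes "f \<in> borel_measurable Q" "g \<in> borel_measurable Q"
    and "\<And>\<omega>. \<omega> \<in> space Q \<Longrightarrow> \<bar>h \<omega>\<bar> \<le> \<bar>f \<omega>\<bar> + \<bar>g \<omega>\<bar>"
  shows "(\<integral>\<^sup>+\<omega>. ennreal \<bar>h \<omega>\<bar> \<partial>Q) \<le> (\<integral>\<^sup>+\<omega>. ennreal \<bar>f \<omega>\<bar> \<partial>Q) + (\<integral>\<^sup>+\<omega>. ennreal \<bar>g \<omega>\<bar> \<partial>Q)"
proof -
  have "(\<integral>\<^sup>+\<omega>. ennreal \<bar>h \<omega>\<bar> \<partial>Q) \<le> (\<integral>\<^sup>+\<omega>. ennreal \<bar>f \<omega>\<bar> + ennreal \<bar>g \<omega>\<bar> \<partial>Q)"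
    using assms(3) by (intro nn_integral_mono) (simp add: ennreal_plus[symmetric] del: ennreal_plus)
  also have "\<dots> = (\<integral>\<^sup>+\<omega>. ennreal \<bar>f \<omega>\<bar> \<partial>Q) + (\<integral>\<^sup>+\<omega>. ennreal \<bar>g \<omega>\<bar> \<partial>Q)"
    using assms(1,2) by (intro nn_integral_add) auto
  finally show ?thesis .
qed

lemma tendsto_ennreal_sandwich0:
  fixes a b c :: "nat \<Rightarrow> ennreal"
  assumes "\<And>n. a n \<le> b n + c n" "b \<longlonglongrightarrow> 0" "c \<longlonglongrightarrow> 0"
  shows "a \<longlonglongrightarrow> 0"
proof (rule tendsto_sandwich[of "\<lambda>_. 0" _ _ "\<lambda>n. b n + c n"])
  show "(\<lambda>n. b n + c n) \<longlonglongrightarrow> 0" using tendsto_add[OF assms(2,3)] by simp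
qed (use assms(1) in auto)

context
  fixes Pset :: "(real \<Rightarrow> 'd::euclidean_space) measure set" and T :: real
  assumes PS: "\<And>Q. Q \<in> Pset \<Longrightarrow> prob_space Q \<and> space Q = paths T \<and> sets Q = sets (filt T T)"
begin

lemma L1G_meas: "X \<in> L1G Pset T s \<Longrightarrow> X \<in> borel_measurable (filt T s)"
  unfolding L1G_def by auto

lemma L1G_measQ: "Q \<in> Pset \<Longrightarrow> s \<le> T \<Longrightarrow> X \<in> L1G Pset T s \<Longrightarrow> X \<in> borel_measurable Q"
  using PS[of Q] by (intro meas_Q[of Q T s]) (auto dest: L1G_meas)

lemma lip_cyl_measQ: "Q \<in> Pset \<Longrightarrow> s \<le> T \<Longrightarrow> lip_cyl T s X \<Longrightarrow> X \<in> borel_measurable Q"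
  using PS[of Q] by (intro meas_Q[of Q T s]) (auto dest: lip_cyl_meas)

lemma lip_cyl_integrable:
  assumes "Q \<in> Pset" "s \<le> T" "lip_cyl T s X" shows "integrable Q X"
proof -
  interpret prob_space Q using PS[OF assms(1)] by simp
  obtain C where C: "\<And>\<omega>. \<omega> \<in> paths T \<Longrightarrow> \<bar>X \<omega>\<bar> \<le> C" using lip_cyl_bdd[OF assms(3)] by blast
  show ?thesis
    by (rule integrable_const_bound[of _ C]) (use C PS[OF assms(1)] lip_cyl_measQ[OF assms] in auto)
qed

lemma L1G_integrable:
  assumes Q: "Q \<in> Pset" and s: "s \<le> T" and X: "X \<in> L1G Pset T s"
  shows "integrable Q X"
proof -
  obtain Xn where Xn: "\<And>n. lip_cyl T s (Xn n)" "(\<lambda>n. Ehat_abs Pset (\<lambda>\<omega>. X \<omega> - Xn n \<omega>)) \<longlonglongrightarrow> 0"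
    using X unfolding L1G_def by blast
  have "eventually (\<lambda>n. Ehat_abs Pset (\<lambda>\<omega>. X \<omega> - Xn n \<omega>) < 1) sequentially"
    using Xn(2) by (rule order_tendstoD) simp
  then obtain n where n: "Ehat_abs Pset (\<lambda>\<omega>. X \<omega> - Xn n \<omega>) < 1"
    by (auto simp: eventually_sequentially)
  have "(\<integral>\<^sup>+\<omega>. ennreal \<bar>X \<omega> - Xn n \<omega>\<bar> \<partial>Q) \<le> Ehat_abs Pset (\<lambda>\<omega>. X \<omega> - Xn n \<omega>)"
    unfolding Ehat_abs_def using Q by (rule SUP_upper)
  also have "\<dots> < \<infinity>" by (rule order.strict_trans[OF n]) simp
  finally have fin: "(\<integral>\<^sup>+\<omega>. ennreal (norm (X \<omega> - Xn n \<omega>)) \<partial>Q) < \<infinity>" by simp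
  have mX: "X \<in> borel_measurable Q" using L1G_measQ[OF Q s X] .
  have mXn: "Xn n \<in> borel_measurable Q" using lip_cyl_measQ[OF Q s Xn(1)] .
  have i1: "integrable Q (\<lambda>\<omega>. X \<omega> - Xn n \<omega>)"
    by (rule integrableI_bounded) (use mX mXn fin in auto)
  have i2: "integrable Q (Xn n)" by (rule lip_cyl_integrable[OF Q s Xn(1)])
  have "integrable Q (\<lambda>\<omega>. (X \<omega> - Xn n \<omega>) + Xn n \<omega>)" using i1 i2 by (rule Bochner_Integration.integrable_add)
  then show ?thesis by simp
qed

lemma lip_cyl_L1G:
  assumes "lip_cyl T s X" shows "X \<in> L1G Pset T s"
proof -
  have "Ehat_abs Pset (\<lambda>\<omega>. X \<omega> - X \<omega>) = 0" unfolding Ehat_abs_def by (cases "Pset = {}") (auto simp: bot_ennreal)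
  then show ?thesis
    unfolding L1G_def using assms lip_cyl_meas[OF assms]
    by (intro CollectI conjI exI[of _ "\<lambda>_. X"]) auto
qed

lemma L1G_mono:
  assumes "s \<le> s'" "X \<in> L1G Pset T s" shows "X \<in> L1G Pset T s'"
proof -
  obtain Xn where Xn: "\<And>n. lip_cyl T s (Xn n)" "(\<lambda>n. Ehat_abs Pset (\<lambda>\<omega>. X \<omega> - Xn n \<omega>)) \<longlonglongrightarrow> 0"
    and m: "X \<in> borel_measurable (filt T s)"
    using assms(2) unfolding L1G_def by blast
  have "X \<in> borel_measurable (filt T s')"
    by (rule measurable_from_subalg[OF _ m]) (use filt_mono[OF assms(1)] in \<open>auto simp: subalgebra_def\<close>)
  then show ?thesis unfolding L1G_def using Xn lip_cyl_mono[OF assms(1)] by blast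
qed

lemma L1G_add:
  assumes s: "s \<le> T" and X: "X \<in> L1G Pset T s" and Y: "Y \<in> L1G Pset T s"
  shows "(\<lambda>\<omega>. X \<omega> + Y \<omega>) \<in> L1G Pset T s"
proof -
  obtain Xn where Xn: "\<And>n. lip_cyl T s (Xn n)" "(\<lambda>n. Ehat_abs Pset (\<lambda>\<omega>. X \<omega> - Xn n \<omega>)) \<longlonglongrightarrow> 0"
    using X unfolding L1G_def by blast
  obtain Yn where Yn: "\<And>n. lip_cyl T s (Yn n)" "(\<lambda>n. Ehat_abs Pset (\<lambda>\<omega>. Y \<omega> - Yn n \<omega>)) \<longlonglongrightarrow> 0"
    using Y unfolding L1G_def by blast
  have m: "(\<lambda>\<omega>. X \<omega> + Y \<omega>) \<in> borel_measurable (filt T s)"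
    using L1G_meas[OF X] L1G_meas[OF Y] by measurable
  have "(\<lambda>n. Ehat_abs Pset (\<lambda>\<omega>. (X \<omega> + Y \<omega>) - (Xn n \<omega> + Yn n \<omega>))) \<longlonglongrightarrow> 0"
  proof (rule tendsto_ennreal_sandwich0[OF _ Xn(2) Yn(2)])
    fix n show "Ehat_abs Pset (\<lambda>\<omega>. (X \<omega> + Y \<omega>) - (Xn n \<omega> + Yn n \<omega>)) \<le>
       Ehat_abs Pset (\<lambda>\<omega>. X \<omega> - Xn n \<omega>) + Ehat_abs Pset (\<lambda>\<omega>. Y \<omega> - Yn n \<omega>)"
    proof (rule Ehat_abs_le, rule nn_abs_add_le)
      fix Q assume Q: "Q \<in> Pset"
      show "(\<lambda>\<omega>. X \<omega> - Xn n \<omega>) \<in> borel_measurable Q"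
        using L1G_measQ[OF Q s X] lip_cyl_measQ[OF Q s Xn(1)] by measurable
      show "(\<lambda>\<omega>. Y \<omega> - Yn n \<omega>) \<in> borel_measurable Q"
        using L1G_measQ[OF Q s Y] lip_cyl_measQ[OF Q s Yn(1)] by measurable
    qed auto
  qed
  then show ?thesis unfolding L1G_def using m lip_cyl_add[OF Xn(1) Yn(1)]
    by (intro CollectI conjI exI[of _ "\<lambda>n \<omega>. Xn n \<omega> + Yn n \<omega>"]) auto
qed

lemma L1G_uminus:
  assumes s: "0 \<le> s" and X: "X \<in> L1G Pset T s"
  shows "(\<lambda>\<omega>. - X \<omega>) \<in> L1G Pset T s"
proof -
  obtain Xn where Xn: "\<And>n. lip_cyl T s (Xn n)" "(\<lambda>n. Ehat_abs Pset (\<lambda>\<omega>. X \<omega> - Xn n \<omega>)) \<longlonglongrightarrow> 0"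
    using X unfolding L1G_def by blast
  have m: "(\<lambda>\<omega>. - X \<omega>) \<in> borel_measurable (filt T s)"
    using L1G_meas[OF X] by measurable
  have e: "Ehat_abs Pset (\<lambda>\<omega>. - X \<omega> - - Xn n \<omega>) = Ehat_abs Pset (\<lambda>\<omega>. X \<omega> - Xn n \<omega>)" for n
    unfolding Ehat_abs_def by (simp add: abs_minus_commute)
  show ?thesis unfolding L1G_def using m Xn(2) lip_cyl_uminus[OF s Xn(1)] e by (auto intro!: exI[of _ "\<lambda>n \<omega>. - Xn n \<omega>"])
qed

lemma L1G_diff:
  assumes "0 \<le> s" "s \<le> T" "X \<in> L1G Pset T s" "Y \<in> L1G Pset T s"
  shows "(\<lambda>\<omega>. X \<omega> - Y \<omega>) \<in> L1G Pset T s"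
  using L1G_add[OF assms(2,3) L1G_uminus[OF assms(1,4)]] by simp

lemma L1G_const: "0 \<le> s \<Longrightarrow> (\<lambda>_. c) \<in> L1G Pset T s"
  by (rule lip_cyl_L1G[OF lip_cyl_const])

lemma L1G_weighted:
  assumes s: "0 \<le> s" "s \<le> T" and w: "lip_cyl T s w" and w01: "\<And>\<omega>. 0 \<le> w \<omega> \<and> w \<omega> \<le> 1"
    and X: "X \<in> L1G Pset T T" and Y: "Y \<in> L1G Pset T T"
  shows "(\<lambda>\<omega>. w \<omega> * X \<omega> + (1 - w \<omega>) * Y \<omega>) \<in> L1G Pset T T"
proof -
  have T0: "0 \<le> T" using s by simp
  have wT: "lip_cyl T T w" using lip_cyl_mono[OF s(2) w] .
  obtain Xn where Xn: "\<And>n. lip_cyl T T (Xn n)" "(\<lambda>n. Ehat_abs Pset (\<lambda>\<omega>. X \<omega> - Xn n \<omega>)) \<longlonglongrightarrow> 0"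
    using X unfolding L1G_def by blast
  obtain Yn where Yn: "\<And>n. lip_cyl T T (Yn n)" "(\<lambda>n. Ehat_abs Pset (\<lambda>\<omega>. Y \<omega> - Yn n \<omega>)) \<longlonglongrightarrow> 0"
    using Y unfolding L1G_def by blast
  have wm: "w \<in> borel_measurable (filt T T)" using lip_cyl_meas[OF wT] .
  have m: "(\<lambda>\<omega>. w \<omega> * X \<omega> + (1 - w \<omega>) * Y \<omega>) \<in> borel_measurable (filt T T)"
    using L1G_meas[OF X] L1G_meas[OF Y] wm by measurable
  have w1: "lip_cyl T T (\<lambda>\<omega>. 1 - w \<omega>)"
    using lip_cyl_add[OF lip_cyl_const[OF T0, where c=1 and T=T] lip_cyl_uminus[OF T0 wT]] by simp
  have lc: "lip_cyl T T (\<lambda>\<omega>. w \<omega> * Xn n \<omega> + (1 - w \<omega>) * Yn n \<omega>)" for n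
    by (intro lip_cyl_add lip_cyl_mult wT w1 Xn(1) Yn(1))
  have "(\<lambda>n. Ehat_abs Pset (\<lambda>\<omega>. (w \<omega> * X \<omega> + (1 - w \<omega>) * Y \<omega>) - (w \<omega> * Xn n \<omega> + (1 - w \<omega>) * Yn n \<omega>))) \<longlonglongrightarrow> 0"
  proof (rule tendsto_ennreal_sandwich0[OF _ Xn(2) Yn(2)])
    fix n show "Ehat_abs Pset (\<lambda>\<omega>. (w \<omega> * X \<omega> + (1 - w \<omega>) * Y \<omega>) - (w \<omega> * Xn n \<omega> + (1 - w \<omega>) * Yn n \<omega>)) \<le>
       Ehat_abs Pset (\<lambda>\<omega>. X \<omega> - Xn n \<omega>) + Ehat_abs Pset (\<lambda>\<omega>. Y \<omega> - Yn n \<omega>)"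
    proof (rule Ehat_abs_le, rule nn_abs_add_le)
      fix Q assume Q: "Q \<in> Pset"
      show "(\<lambda>\<omega>. X \<omega> - Xn n \<omega>) \<in> borel_measurable Q"
        using L1G_measQ[OF Q _ X] lip_cyl_measQ[OF Q _ Xn(1)] by measurable
      show "(\<lambda>\<omega>. Y \<omega> - Yn n \<omega>) \<in> borel_measurable Q"
        using L1G_measQ[OF Q _ Y] lip_cyl_measQ[OF Q _ Yn(1)] by measurable
      fix \<omega>
      have "\<bar>(w \<omega> * X \<omega> + (1 - w \<omega>) * Y \<omega>) - (w \<omega> * Xn n \<omega> + (1 - w \<omega>) * Yn n \<omega>)\<bar>
          = \<bar>w \<omega> * (X \<omega> - Xn n \<omega>) + (1 - w \<omega>) * (Y \<omega> - Yn n \<omega>)\<bar>" by (simp add: algebra_simps)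
      also have "\<dots> \<le> \<bar>w \<omega>\<bar> * \<bar>X \<omega> - Xn n \<omega>\<bar> + \<bar>1 - w \<omega>\<bar> * \<bar>Y \<omega> - Yn n \<omega>\<bar>"
        by (metis abs_mult abs_triangle_ineq)
      also have "\<dots> \<le> 1 * \<bar>X \<omega> - Xn n \<omega>\<bar> + 1 * \<bar>Y \<omega> - Yn n \<omega>\<bar>"
        using w01[of \<omega>] by (intro add_mono mult_right_mono) auto
      finally show "\<bar>(w \<omega> * X \<omega> + (1 - w \<omega>) * Y \<omega>) - (w \<omega> * Xn n \<omega> + (1 - w \<omega>) * Yn n \<omega>)\<bar>
          \<le> \<bar>X \<omega> - Xn n \<omega>\<bar> + \<bar>Y \<omega> - Yn n \<omega>\<bar>" by simp
    qed
  qed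
  then show ?thesis unfolding L1G_def using m lc
    by (intro CollectI conjI exI[of _ "\<lambda>n \<omega>. w \<omega> * Xn n \<omega> + (1 - w \<omega>) * Yn n \<omega>"]) auto
qed

end

definition Wt :: "real \<Rightarrow> real \<Rightarrow> ((real \<Rightarrow> 'd::euclidean_space) \<Rightarrow> real) set" where
  "Wt T t = {w. lip_cyl T t w \<and> (\<forall>\<omega>. 0 \<le> w \<omega> \<and> w \<omega> \<le> 1)}"

definition err :: "'a measure \<Rightarrow> ('a \<Rightarrow> real) \<Rightarrow> 'a set \<Rightarrow> ('a \<Rightarrow> real) \<Rightarrow> real" where
  "err P h A w = (\<integral>\<omega>. \<bar>indicator A \<omega> - w \<omega>\<bar> * h \<omega> \<partial>P)"

definition approx :: "(real \<Rightarrow> 'd::euclidean_space) measure \<Rightarrow> ((real \<Rightarrow> 'd) \<Rightarrow> real) \<Rightarrow> real \<Rightarrow> real \<Rightarrow> (real \<Rightarrow> 'd) set \<Rightarrow> bool" where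
  "approx P h T t A \<longleftrightarrow> (\<forall>e>0. \<exists>w\<in>Wt T t. err P h A w < e)"

lemma Wt_const: "0 \<le> t \<Longrightarrow> 0 \<le> c \<Longrightarrow> c \<le> 1 \<Longrightarrow> (\<lambda>_. c) \<in> Wt T t"
  unfolding Wt_def using lip_cyl_const by auto

lemma Wt_compl:
  assumes t0: "0 \<le> t" and w: "w \<in> Wt T t" shows "(\<lambda>\<omega>. 1 - w \<omega>) \<in> Wt T t"
proof -
  have "lip_cyl T t (\<lambda>\<omega>. 1 + - w \<omega>)"
    by (rule lip_cyl_add[OF lip_cyl_const[OF t0] lip_cyl_uminus[OF t0]]) (use w in \<open>auto simp: Wt_def\<close>)
  then show ?thesis using w unfolding Wt_def by auto
qed

lemma Wt_mult: "w \<in> Wt T t \<Longrightarrow> v \<in> Wt T t \<Longrightarrow> (\<lambda>\<omega>. w \<omega> * v \<omega>) \<in> Wt T t"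
  unfolding Wt_def using lip_cyl_mult[of T t w v] by (auto intro: mult_le_one mult_nonneg_nonneg)

lemma abs01: "0 \<le> x \<and> x \<le> 1 \<Longrightarrow> 0 \<le> y \<and> y \<le> 1 \<Longrightarrow> \<bar>x - y\<bar> \<le> (1::real)"
  by auto

lemma ind01: "0 \<le> (indicator S \<omega>::real) \<and> (indicator S \<omega>::real) \<le> 1"
  by (auto simp: indicator_def)

context
  fixes P :: "(real \<Rightarrow> 'd::euclidean_space) measure" and T t :: real and h :: "(real \<Rightarrow> 'd) \<Rightarrow> real"
  assumes Pp: "prob_space P" and spP: "space P = paths T" and setsP: "sets P = sets (filt T T)"
    and t0: "0 \<le> t" and tT: "t \<le> T"
    and hi: "integrable P h" and hnn: "\<And>\<omega>. 0 \<le> h \<omega>"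
begin

lemma Wt_meas: "w \<in> Wt T t \<Longrightarrow> w \<in> borel_measurable P"
  unfolding Wt_def using meas_Q[OF setsP spP tT] lip_cyl_meas by blast

lemma sets_t: "A \<in> sets (filt T t) \<Longrightarrow> A \<in> sets P"
  using filt_mono[OF tT, of T] setsP by auto

lemma int_uv:
  assumes "u \<in> borel_measurable P" "v \<in> borel_measurable P" "\<And>\<omega>. \<bar>u \<omega> - v \<omega>\<bar> \<le> 1"
  shows "integrable P (\<lambda>\<omega>. \<bar>u \<omega> - v \<omega>\<bar> * h \<omega>)"
proof (rule Bochner_Integration.integrable_bound[OF hi])
  show "(\<lambda>\<omega>. \<bar>u \<omega> - v \<omega>\<bar> * h \<omega>) \<in> borel_measurable P" using assms(1,2) hi by measurable
  show "AE \<omega> in P. norm (\<bar>u \<omega> - v \<omega>\<bar> * h \<omega>) \<le> norm (h \<omega>)"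
    using assms(3) hnn by (auto simp: abs_mult intro!: mult_left_le_one_le)
qed

lemma tri:
  assumes m: "a \<in> borel_measurable P" "b \<in> borel_measurable P" "c \<in> borel_measurable P"
    and b: "\<And>\<omega>. 0 \<le> a \<omega> \<and> a \<omega> \<le> 1" "\<And>\<omega>. 0 \<le> b \<omega> \<and> b \<omega> \<le> 1" "\<And>\<omega>. 0 \<le> c \<omega> \<and> c \<omega> \<le> 1"
  shows "(\<integral>\<omega>. \<bar>a \<omega> - c \<omega>\<bar> * h \<omega> \<partial>P) \<le> (\<integral>\<omega>. \<bar>a \<omega> - b \<omega>\<bar> * h \<omega> \<partial>P) + (\<integral>\<omega>. \<bar>b \<omega> - c \<omega>\<bar> * h \<omega> \<partial>P)"
proof -
  have i: "integrable P (\<lambda>\<omega>. \<bar>a \<omega> - c \<omega>\<bar> * h \<omega>)" "integrable P (\<lambda>\<omega>. \<bar>a \<omega> - b \<omega>\<bar> * h \<omega>)"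
     "integrable P (\<lambda>\<omega>. \<bar>b \<omega> - c \<omega>\<bar> * h \<omega>)"
    using m b by (auto intro!: int_uv abs01)
  have "(\<integral>\<omega>. \<bar>a \<omega> - c \<omega>\<bar> * h \<omega> \<partial>P) \<le> (\<integral>\<omega>. \<bar>a \<omega> - b \<omega>\<bar> * h \<omega> + \<bar>b \<omega> - c \<omega>\<bar> * h \<omega> \<partial>P)"
  proof (rule integral_mono[OF i(1) Bochner_Integration.integrable_add[OF i(2,3)]])
    fix \<omega>
    have "\<bar>a \<omega> - c \<omega>\<bar> * h \<omega> \<le> (\<bar>a \<omega> - b \<omega>\<bar> + \<bar>b \<omega> - c \<omega>\<bar>) * h \<omega>"
      by (rule mult_right_mono[OF _ hnn]) linarith
    then show "\<bar>a \<omega> - c \<omega>\<bar> * h \<omega> \<le> \<bar>a \<omega> - b \<omega>\<bar> * h \<omega> + \<bar>b \<omega> - c \<omega>\<bar> * h \<omega>"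
      by (simp add: distrib_right)
  qed
  also have "\<dots> = (\<integral>\<omega>. \<bar>a \<omega> - b \<omega>\<bar> * h \<omega> \<partial>P) + (\<integral>\<omega>. \<bar>b \<omega> - c \<omega>\<bar> * h \<omega> \<partial>P)"
    by (rule Bochner_Integration.integral_add[OF i(2,3)])
  finally show ?thesis .
qed

lemma approx_empty: "approx P h T t {}"
  unfolding approx_def err_def using Wt_const[OF t0, of 0] by (auto intro!: bexI[of _ "\<lambda>_. 0"])

lemma approx_compl:
  assumes "approx P h T t A" shows "approx P h T t (paths T - A)"
  unfolding approx_def
proof (intro allI impI)
  fix e :: real assume e: "e > 0"
  obtain w where w: "w \<in> Wt T t" "err P h A w < e" using assms e unfolding approx_def by blast
  have "err P h (paths T - A) (\<lambda>\<omega>. 1 - w \<omega>) = err P h A w"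
    unfolding err_def by (intro Bochner_Integration.integral_cong) (auto simp: spP indicator_def)
  then show "\<exists>w\<in>Wt T t. err P h (paths T - A) w < e" using w Wt_compl[OF t0 w(1)]
    by (intro bexI[of _ "\<lambda>\<omega>. 1 - w \<omega>"]) auto
qed

lemma approx_Int:
  assumes A: "A \<in> sets P" "approx P h T t A" and B: "B \<in> sets P" "approx P h T t B"
  shows "approx P h T t (A \<inter> B)"
  unfolding approx_def
proof (intro allI impI)
  fix e :: real assume e: "e > 0"
  obtain w where w: "w \<in> Wt T t" "err P h A w < e/2" using A e unfolding approx_def by (meson half_gt_zero)
  obtain v where v: "v \<in> Wt T t" "err P h B v < e/2" using B e unfolding approx_def by (meson half_gt_zero)
  have wb: "\<And>\<omega>. 0 \<le> w \<omega> \<and> w \<omega> \<le> 1" "\<And>\<omega>. 0 \<le> v \<omega> \<and> v \<omega> \<le> 1" using w v unfolding Wt_def by auto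
  have m: "w \<in> borel_measurable P" "v \<in> borel_measurable P" using Wt_meas w v by auto
  have i: "integrable P (\<lambda>\<omega>. \<bar>indicator (A \<inter> B) \<omega> - w \<omega> * v \<omega>\<bar> * h \<omega>)"
     "integrable P (\<lambda>\<omega>. \<bar>indicator A \<omega> - w \<omega>\<bar> * h \<omega>)" "integrable P (\<lambda>\<omega>. \<bar>indicator B \<omega> - v \<omega>\<bar> * h \<omega>)"
    using m wb A(1) B(1) by (auto intro!: int_uv abs01 ind01 mult_le_one mult_nonneg_nonneg)
  have pt: "\<bar>indicator (A \<inter> B) \<omega> - w \<omega> * v \<omega>\<bar> \<le> \<bar>indicator A \<omega> - w \<omega>\<bar> + \<bar>indicator B \<omega> - v \<omega>\<bar>" for \<omega>
  proof -
    have "indicator (A \<inter> B) \<omega> - w \<omega> * v \<omega> = indicator A \<omega> * (indicator B \<omega> - v \<omega>) + v \<omega> * (indicator A \<omega> - w \<omega>)"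
      by (simp add: indicator_def algebra_simps)
    also have "\<bar>\<dots>\<bar> \<le> \<bar>indicator A \<omega>\<bar> * \<bar>indicator B \<omega> - v \<omega>\<bar> + \<bar>v \<omega>\<bar> * \<bar>indicator A \<omega> - w \<omega>\<bar>"
      by (metis abs_mult abs_triangle_ineq)
    also have "\<dots> \<le> 1 * \<bar>indicator B \<omega> - v \<omega>\<bar> + 1 * \<bar>indicator A \<omega> - w \<omega>\<bar>"
      using wb(2)[of \<omega>] by (intro add_mono mult_right_mono) (auto simp: indicator_def)
    finally show ?thesis by simp
  qed
  have "err P h (A \<inter> B) (\<lambda>\<omega>. w \<omega> * v \<omega>) \<le> (\<integral>\<omega>. \<bar>indicator A \<omega> - w \<omega>\<bar> * h \<omega> + \<bar>indicator B \<omega> - v \<omega>\<bar> * h \<omega> \<partial>P)"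
    unfolding err_def
  proof (rule integral_mono[OF i(1) Bochner_Integration.integrable_add[OF i(2,3)]])
    fix \<omega>
    have "\<bar>indicator (A \<inter> B) \<omega> - w \<omega> * v \<omega>\<bar> * h \<omega> \<le> (\<bar>indicator A \<omega> - w \<omega>\<bar> + \<bar>indicator B \<omega> - v \<omega>\<bar>) * h \<omega>"
      by (rule mult_right_mono[OF pt hnn])
    then show "\<bar>indicator (A \<inter> B) \<omega> - w \<omega> * v \<omega>\<bar> * h \<omega> \<le> \<bar>indicator A \<omega> - w \<omega>\<bar> * h \<omega> + \<bar>indicator B \<omega> - v \<omega>\<bar> * h \<omega>"
      by (simp add: distrib_right)
  qed
  also have "\<dots> = err P h A w + err P h B v"
    unfolding err_def by (rule Bochner_Integration.integral_add[OF i(2,3)])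
  finally show "\<exists>w\<in>Wt T t. err P h (A \<inter> B) w < e"
    using w v Wt_mult[OF w(1) v(1)] by (intro bexI[of _ "\<lambda>\<omega>. w \<omega> * v \<omega>"]) auto
qed

lemma approx_Un:
  assumes A: "A \<in> sets P" "approx P h T t A" and B: "B \<in> sets P" "approx P h T t B"
  shows "approx P h T t (A \<union> B)"
proof -
  have sub: "A \<subseteq> paths T" "B \<subseteq> paths T" using A(1) B(1) sets.sets_into_space spP by auto
  have "A \<union> B = paths T - ((paths T - A) \<inter> (paths T - B))" using sub by auto
  moreover have "approx P h T t (paths T - ((paths T - A) \<inter> (paths T - B)))"
    using A B spP
    by (intro approx_compl approx_Int approx_compl) (auto simp flip: spP)
  ultimately show ?thesis by simp
qed

lemma approx_finUN:
  fixes A :: "nat \<Rightarrow> (real \<Rightarrow> 'd) set"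
  assumes "\<And>i. A i \<in> sets P" "\<And>i. approx P h T t (A i)"
  shows "approx P h T t (\<Union>i<n. A i)"
proof (induction n)
  case 0 then show ?case using approx_empty by simp
next
  case (Suc n)
  have "(\<Union>i<Suc n. A i) = (\<Union>i<n. A i) \<union> A n" by (auto simp: lessThan_Suc)
  moreover have "(\<Union>i<n. A i) \<in> sets P" using assms(1) by auto
  ultimately show ?case using approx_Un Suc assms by simp
qed

lemma approx_UN:
  fixes A :: "nat \<Rightarrow> (real \<Rightarrow> 'd) set"
  assumes "\<And>i. A i \<in> sets P" "\<And>i. approx P h T t (A i)"
  shows "approx P h T t (\<Union>i. A i)"
  unfolding approx_def
proof (intro allI impI)
  fix e :: real assume e: "e > 0"
  define B where "B n = (\<Union>i<n. A i)" for n
  have Bs: "B n \<in> sets P" for n unfolding B_def using assms(1) by auto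
  have Us: "(\<Union>i. A i) \<in> sets P" using assms(1) by auto
  have lim: "(\<lambda>n. \<integral>\<omega>. \<bar>indicator (\<Union>i. A i) \<omega> - indicator (B n) \<omega>\<bar> * h \<omega> \<partial>P) \<longlonglongrightarrow> (\<integral>\<omega>. 0 \<partial>P)"
  proof (rule integral_dominated_convergence[where w = h])
    show "(\<lambda>\<omega>. 0::real) \<in> borel_measurable P" by simp
    show "(\<lambda>\<omega>. \<bar>indicator (\<Union>i. A i) \<omega> - indicator (B n) \<omega>\<bar> * h \<omega>) \<in> borel_measurable P" for n
      using Us Bs hi by measurable
    show "integrable P h" by (rule hi)
    show "AE \<omega> in P. (\<lambda>n. \<bar>indicator (\<Union>i. A i) \<omega> - indicator (B n) \<omega>\<bar> * h \<omega>) \<longlonglongrightarrow> 0"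
    proof (rule AE_I2)
      fix \<omega>
      show "(\<lambda>n. \<bar>indicator (\<Union>i. A i) \<omega> - indicator (B n) \<omega>\<bar> * h \<omega>) \<longlonglongrightarrow> 0"
      proof (cases "\<omega> \<in> (\<Union>i. A i)")
        case True
        then obtain i where "\<omega> \<in> A i" by auto
        then have "eventually (\<lambda>n. \<bar>indicator (\<Union>i. A i) \<omega> - indicator (B n) \<omega>\<bar> * h \<omega> = 0) sequentially"
          unfolding eventually_sequentially B_def using True
          by (intro exI[of _ "Suc i"]) (auto simp: indicator_def)
        then show ?thesis by (rule tendsto_eventually)
      next
        case False
        then have "\<omega> \<notin> B n" for n unfolding B_def by auto
        then show ?thesis using False by simp
      qed
    qed
    show "AE \<omega> in P. norm (\<bar>indicator (\<Union>i. A i) \<omega> - indicator (B n) \<omega>\<bar> * h \<omega>) \<le> h \<omega>" for n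
      using hnn by (auto simp: indicator_def)
  qed
  then have "eventually (\<lambda>n. (\<integral>\<omega>. \<bar>indicator (\<Union>i. A i) \<omega> - indicator (B n) \<omega>\<bar> * h \<omega> \<partial>P) < e/2) sequentially"
    using e by (intro order_tendstoD) auto
  then obtain N where N: "(\<integral>\<omega>. \<bar>indicator (\<Union>i. A i) \<omega> - indicator (B N) \<omega>\<bar> * h \<omega> \<partial>P) < e/2"
    by (auto simp: eventually_sequentially)
  obtain w where w: "w \<in> Wt T t" "err P h (B N) w < e/2"
    using approx_finUN[OF assms, where n=N] e unfolding approx_def B_def by (meson half_gt_zero)
  have wb: "\<And>\<omega>. 0 \<le> w \<omega> \<and> w \<omega> \<le> 1" using w unfolding Wt_def by auto
  have "err P h (\<Union>i. A i) w \<le> (\<integral>\<omega>. \<bar>indicator (\<Union>i. A i) \<omega> - indicator (B N) \<omega>\<bar> * h \<omega> \<partial>P) + err P h (B N) w"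
    unfolding err_def using Us Bs Wt_meas[OF w(1)] wb
    by (intro tri) auto
  then show "\<exists>w\<in>Wt T t. err P h (\<Union>i. A i) w < e" using N w by (intro bexI[of _ w]) auto
qed

lemma approx_gen:
  assumes s: "s \<in> {0..t}" and U: "open U"
  shows "approx P h T t {\<omega> \<in> paths T. \<omega> s \<in> U}"
proof (cases "U = UNIV")
  case True
  then show ?thesis using approx_compl[OF approx_empty] by simp
next
  case False
  define A where "A = {\<omega> \<in> paths T. \<omega> s \<in> U}"
  have "A \<in> gen T t" unfolding A_def gen_def using s U by blast
  then have As: "A \<in> sets P" using sets_t unfolding sets_filt by auto
  define w where "w k \<omega> = min 1 (real k * infdist (\<omega> s) (- U))" for k :: nat and \<omega> :: "real \<Rightarrow> 'd"
  have cl: "closed (- U)" "- U \<noteq> {}" using U False by auto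
  have wW: "w k \<in> Wt T t" for k
  proof -
    define \<phi> where "\<phi> xs = min 1 (real k * infdist (hd xs) (- U))" for xs :: "'d list"
    have lp: "LP 1 \<phi> (real k) 1"
      unfolding LP_def
    proof (intro conjI allI impI)
      fix xs show "\<bar>\<phi> xs\<bar> \<le> 1" unfolding \<phi>_def using infdist_nonneg[of "hd xs" "-U"] by auto
    next
      fix xs ys :: "'d list" assume l: "length xs = 1" "length ys = 1"
      have "\<bar>\<phi> xs - \<phi> ys\<bar> \<le> \<bar>real k * infdist (hd xs) (- U) - real k * infdist (hd ys) (- U)\<bar>"
        unfolding \<phi>_def by linarith
      also have "\<dots> = real k * \<bar>infdist (hd xs) (- U) - infdist (hd ys) (- U)\<bar>"
        by (simp add: abs_mult right_diff_distrib[symmetric])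
      also have "\<dots> \<le> real k * dist (hd xs) (hd ys)"
        by (intro mult_left_mono infdist_triangle_abs) auto
      also have "dist (hd xs) (hd ys) = (\<Sum>i<1. norm (xs ! i - ys ! i))"
        using l by (cases xs; cases ys) (auto simp: dist_norm)
      finally show "\<bar>\<phi> xs - \<phi> ys\<bar> \<le> real k * (\<Sum>i<1. norm (xs ! i - ys ! i))" .
    qed
    have "lip_cyl T t (w k)"
      unfolding lip_cyl_iff using s lp
      by (intro exI[of _ "[s]"] exI[of _ \<phi>] exI[of _ "real k"] exI[of _ 1]) (auto simp: w_def \<phi>_def)
    moreover have "0 \<le> w k \<omega> \<and> w k \<omega> \<le> 1" for \<omega> unfolding w_def using infdist_nonneg[of "\<omega> s" "- U"] by auto
    ultimately show ?thesis unfolding Wt_def by blast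
  qed
  have lim: "(\<lambda>k. err P h A (w k)) \<longlonglongrightarrow> (\<integral>\<omega>. 0 \<partial>P)"
    unfolding err_def
  proof (rule integral_dominated_convergence[where w = h])
    show "(\<lambda>\<omega>. 0::real) \<in> borel_measurable P" by simp
    show "(\<lambda>\<omega>. \<bar>indicator A \<omega> - w k \<omega>\<bar> * h \<omega>) \<in> borel_measurable P" for k
      using As Wt_meas[OF wW] hi by measurable
    show "integrable P h" by (rule hi)
    show "AE \<omega> in P. (\<lambda>k. \<bar>indicator A \<omega> - w k \<omega>\<bar> * h \<omega>) \<longlonglongrightarrow> 0"
    proof (rule AE_I2)
      fix \<omega> assume \<omega>: "\<omega> \<in> space P"
      show "(\<lambda>k. \<bar>indicator A \<omega> - w k \<omega>\<bar> * h \<omega>) \<longlonglongrightarrow> 0"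
      proof (cases "\<omega> s \<in> U")
        case True
        have d: "infdist (\<omega> s) (- U) > 0" using infdist_pos_not_in_closed[OF cl] True by auto
        obtain K :: nat where K: "K > 1 / infdist (\<omega> s) (- U)" using reals_Archimedean2 by blast
        have "eventually (\<lambda>k. \<bar>indicator A \<omega> - w k \<omega>\<bar> * h \<omega> = 0) sequentially"
          unfolding eventually_sequentially
        proof (intro exI allI impI)
          fix k assume k: "K \<le> k"
          have "1 < real K * infdist (\<omega> s) (- U)" using K d by (simp add: field_simps)
          also have "\<dots> \<le> real k * infdist (\<omega> s) (- U)" using k d by (intro mult_right_mono) auto
          finally have "w k \<omega> = 1" unfolding w_def by simp
          moreover have "\<omega> \<in> A" using True \<omega> spP unfolding A_def by auto
          ultimately show "\<bar>indicator A \<omega> - w k \<omega>\<bar> * h \<omega> = 0" by simp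
        qed
        then show ?thesis by (rule tendsto_eventually)
      next
        case False
        then have "w k \<omega> = 0" for k unfolding w_def by simp
        moreover have "\<omega> \<notin> A" using False unfolding A_def by auto
        ultimately show ?thesis by simp
      qed
    qed
    show "AE \<omega> in P. norm (\<bar>indicator A \<omega> - w k \<omega>\<bar> * h \<omega>) \<le> h \<omega>" for k
    proof (rule AE_I2)
      fix \<omega>
      have "\<bar>indicator A \<omega> - w k \<omega>\<bar> \<le> 1"
        using wW[of k] unfolding Wt_def by (intro abs01 ind01) auto
      then show "norm (\<bar>indicator A \<omega> - w k \<omega>\<bar> * h \<omega>) \<le> h \<omega>"
        using hnn[of \<omega>] by (simp add: abs_mult mult_left_le_one_le)
    qed
  qed
  show ?thesis unfolding approx_def A_def[symmetric]
  proof (intro allI impI)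
    fix e :: real assume "e > 0"
    then have "eventually (\<lambda>k. err P h A (w k) < e) sequentially" using lim by (intro order_tendstoD) auto
    then obtain k where "err P h A (w k) < e" by (auto simp: eventually_sequentially)
    then show "\<exists>w\<in>Wt T t. err P h A w < e" using wW by blast
  qed
qed

lemma approx_all:
  assumes "A \<in> sets (filt T t)" shows "approx P h T t A"
proof -
  define Dk where "Dk = {A \<in> sets (filt T t). approx P h T t A}"
  have sa: "sigma_algebra (paths T) Dk"
    unfolding sigma_algebra_iff2
  proof (intro conjI ballI allI impI)
    show "Dk \<subseteq> Pow (paths T)" unfolding Dk_def using sets.sets_into_space[of _ "filt T t"] by auto
    show "{} \<in> Dk" unfolding Dk_def using approx_empty by auto
  next
    fix s assume "s \<in> Dk"
    then show "paths T - s \<in> Dk" unfolding Dk_def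
      using approx_compl sets.compl_sets[of s "filt T t"] by auto
  next
    fix A :: "nat \<Rightarrow> _" assume "range A \<subseteq> Dk"
    then have "\<And>i. A i \<in> sets (filt T t)" "\<And>i. approx P h T t (A i)" unfolding Dk_def by auto
    then show "(\<Union>i. A i) \<in> Dk" unfolding Dk_def using approx_UN sets_t by auto
  qed
  have "gen T t \<subseteq> Dk"
  proof
    fix A :: "(real \<Rightarrow> 'd) set" assume "A \<in> gen T t"
    then obtain s U where A: "A = {\<omega> \<in> paths T. \<omega> s \<in> U}" "s \<in> {0..t}" "open U" unfolding gen_def by blast
    then have "A \<in> sets (filt T t)" unfolding sets_filt gen_def by blast
    then show "A \<in> Dk" unfolding Dk_def using approx_gen A by auto
  qed
  then have "sigma_sets (paths T) (gen T t) \<subseteq> Dk" by (rule sigma_algebra.sigma_sets_subset[OF sa])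
  then show ?thesis using assms unfolding sets_filt Dk_def by auto
qed

end

lemma arctan_sup_pt:
  fixes a :: real and b :: "nat \<Rightarrow> real"
  assumes "ennreal (arctan a + pi/2) \<le> (SUP n. ennreal (arctan (b n) + pi/2))"
  shows "ereal a \<le> (SUP n. ereal (b n))"
proof (rule ccontr)
  assume "\<not> ?thesis"
  then have "(SUP n. ereal (b n)) < ereal a" by simp
  then obtain c where c1: "(SUP n. ereal (b n)) < ereal c" and c2: "c < a"
    by (metis ereal_dense2 less_ereal.simps(1))
  have "\<And>n. b n \<le> c" using c1 by (metis SUP_lessD UNIV_I ereal_less_eq(3) less_imp_le)
  then have "\<And>n. ennreal (arctan (b n) + pi/2) \<le> ennreal (arctan c + pi/2)"
    by (intro ennreal_leI) (simp add: arctan_monotone')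
  then have "(SUP n. ennreal (arctan (b n) + pi/2)) \<le> ennreal (arctan c + pi/2)"
    by (intro SUP_least) auto
  also have "\<dots> < ennreal (arctan a + pi/2)"
    using c2 arctan_lbound[of c] arctan_less_iff[of c a]
    by (subst ennreal_less_iff) auto
  finally show False using assms by simp
qed


lemma countable_dominating:
  fixes N :: "'a measure" and f :: "'i \<Rightarrow> 'a \<Rightarrow> real"
  assumes N: "prob_space N" and I: "I \<noteq> {}"
    and meas: "\<And>i. i \<in> I \<Longrightarrow> f i \<in> borel_measurable N"
  shows "\<exists>z::nat \<Rightarrow> 'i. range z \<subseteq> I \<and>
           (\<forall>i\<in>I. AE \<omega> in N. ereal (f i \<omega>) \<le> (SUP n. ereal (f (z n) \<omega>)))"
proof -
  interpret prob_space N by (rule N)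
  define h where "h i \<omega> = ennreal (arctan (f i \<omega>) + pi/2)" for i \<omega>
  define H where "H z \<omega> = (SUP n. h (z n) \<omega>)" for z :: "nat \<Rightarrow> 'i" and \<omega>
  define V where "V z = (\<integral>\<^sup>+\<omega>. H z \<omega> \<partial>N)" for z
  define Zs where "Zs = {z::nat \<Rightarrow> 'i. range z \<subseteq> I}"
  have hm: "h i \<in> borel_measurable N" if "i \<in> I" for i
    unfolding h_def using meas[OF that] by measurable
  have Hm: "H z \<in> borel_measurable N" if "z \<in> Zs" for z
    unfolding H_def using hm that Zs_def by (intro borel_measurable_SUP) auto
  have Hb: "H z \<omega> \<le> ennreal pi" for z \<omega>
    unfolding H_def h_def
  proof (intro SUP_least ennreal_leI)
    fix n show "arctan (f (z n) \<omega>) + pi/2 \<le> pi" using arctan_ubound[of "f (z n) \<omega>"] by linarith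
  qed
  have Vb: "V z \<le> ennreal pi" for z
  proof -
    have "V z \<le> (\<integral>\<^sup>+\<omega>. ennreal pi \<partial>N)" unfolding V_def by (intro nn_integral_mono) (use Hb in auto)
    also have "\<dots> = ennreal pi" by (simp add: emeasure_space_1)
    finally show ?thesis .
  qed
  obtain i0 where i0: "i0 \<in> I" using I by auto
  have Zne: "V ` Zs \<noteq> {}" using i0 by (auto simp: Zs_def intro!: exI[of _ "\<lambda>_. i0"])
  obtain g :: "nat \<Rightarrow> ennreal" where g: "range g \<subseteq> V ` Zs" "Sup (V ` Zs) = (SUP i. g i)"
    using ennreal_Sup_countable_SUP[OF Zne] by auto
  have "\<forall>k. \<exists>y. y \<in> Zs \<and> V y = g k" using g(1) by (metis image_iff range_subsetD)
  then obtain y where y: "\<And>k. y k \<in> Zs" "\<And>k. V (y k) = g k" by metis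
  define z where "z n = (case prod_decode n of (k, m) \<Rightarrow> y k m)" for n
  have zZ: "z \<in> Zs" using y(1) unfolding Zs_def z_def by (auto split: prod.splits simp: image_subset_iff)
  have yz: "y k m = z (prod_encode (k, m))" for k m unfolding z_def by simp
  have "H (y k) \<omega> \<le> H z \<omega>" for k \<omega>
    unfolding H_def by (intro SUP_least) (metis SUP_upper UNIV_I yz)
  then have "V (y k) \<le> V z" for k unfolding V_def by (intro nn_integral_mono) auto
  then have "Sup (V ` Zs) \<le> V z" unfolding g(2) y(2)[symmetric] by (intro SUP_least) auto
  moreover have "V z \<le> Sup (V ` Zs)" using zZ by (intro Sup_upper) auto
  ultimately have Vz: "V z = Sup (V ` Zs)" by (rule antisym[rotated])
  have dom: "AE \<omega> in N. ereal (f i \<omega>) \<le> (SUP n. ereal (f (z n) \<omega>))" if i: "i \<in> I" for i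
  proof -
    define z' where "z' = case_nat i z"
    have z'Z: "z' \<in> Zs" using zZ i unfolding Zs_def z'_def by (auto split: nat.splits simp: image_subset_iff)
    have le1: "H z \<omega> \<le> H z' \<omega>" for \<omega>
      unfolding H_def z'_def by (intro SUP_least) (metis SUP_upper UNIV_I old.nat.simps(5))
    have le2: "h i \<omega> \<le> H z' \<omega>" for \<omega>
      unfolding H_def z'_def by (metis SUP_upper UNIV_I old.nat.simps(4))
    have "V z' \<le> V z" using z'Z Vz by (auto intro: Sup_upper)
    moreover have "V z \<le> V z'" unfolding V_def by (intro nn_integral_mono le1)
    ultimately have eq: "V z' = V z" by simp
    have fin: "V z \<noteq> \<infinity>" using Vb[of z] by (auto simp: top_unique)
    have "(\<integral>\<^sup>+\<omega>. H z' \<omega> - H z \<omega> \<partial>N) = V z' - V z"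
      unfolding V_def using Hm[OF z'Z] Hm[OF zZ] fin le1 unfolding V_def
      by (intro nn_integral_diff) auto
    also have "\<dots> = 0" using eq fin by simp
    finally have "AE \<omega> in N. H z' \<omega> - H z \<omega> = 0"
      using Hm[OF z'Z] Hm[OF zZ] by (subst nn_integral_0_iff_AE[symmetric]) auto
    then show ?thesis
    proof (rule eventually_mono)
      fix \<omega> assume "H z' \<omega> - H z \<omega> = 0"
      then have "H z' \<omega> \<le> H z \<omega>" by (simp add: diff_eq_0_iff_ennreal)
      with le2 have "h i \<omega> \<le> H z \<omega>" by (rule order_trans)
      then show "ereal (f i \<omega>) \<le> (SUP n. ereal (f (z n) \<omega>))"
        unfolding H_def h_def by (rule arctan_sup_pt)
    qed
  qed
  show ?thesis using zZ dom unfolding Zs_def by blast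
qed


definition fX :: "(real \<Rightarrow> 'd::euclidean_space) measure \<Rightarrow> real \<Rightarrow> real \<Rightarrow> (real \<Rightarrow> ((real \<Rightarrow> 'd) \<Rightarrow> real) \<Rightarrow> (real \<Rightarrow> 'd) \<Rightarrow> real)
   \<Rightarrow> ((real \<Rightarrow> 'd) \<Rightarrow> real) \<Rightarrow> (real \<Rightarrow> 'd) \<Rightarrow> real" where
  "fX P T t Et X \<omega> = real_cond_exp P (filt T t) X \<omega> - Et t X \<omega>"

lemma wX_int:
  fixes X w :: "'a \<Rightarrow> real"
  assumes "integrable P X" "w \<in> borel_measurable P" "\<And>\<omega>. \<bar>w \<omega>\<bar> \<le> 1"
  shows "integrable P (\<lambda>\<omega>. w \<omega> * X \<omega>)"
proof (rule Bochner_Integration.integrable_bound[OF assms(1)])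
  show "(\<lambda>\<omega>. w \<omega> * X \<omega>) \<in> borel_measurable P" using assms by measurable
  show "AE \<omega> in P. norm (w \<omega> * X \<omega>) \<le> norm (X \<omega>)"
    using assms(3) by (auto simp: abs_mult intro!: mult_left_le_one_le)
qed

lemma pt_alg1:
  fixes a b c w :: real
  assumes "w * a + (1 - w) * b \<le> c" "0 \<le> w" "w \<le> 1" "b \<le> a"
  shows "max (max a b - c) 0 \<le> \<bar>1 - w\<bar> * \<bar>a - b\<bar>"
proof -
  have e: "\<bar>1 - w\<bar> * \<bar>a - b\<bar> = (1 - w) * (a - b)" using assms by (simp add: abs_mult)
  have "a - c \<le> (1 - w) * (a - b)" using assms(1) by (simp add: algebra_simps)
  moreover have "0 \<le> (1 - w) * (a - b)" using assms by simp
  ultimately show ?thesis using e assms(3,4) by (simp add: abs_of_nonneg)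
qed

lemma pt_alg2:
  fixes a b c w :: real
  assumes "w * a + (1 - w) * b \<le> c" "0 \<le> w" "w \<le> 1" "a < b"
  shows "max (max a b - c) 0 \<le> \<bar>0 - w\<bar> * \<bar>a - b\<bar>"
proof -
  have e: "\<bar>0 - w\<bar> * \<bar>a - b\<bar> = w * (b - a)" using assms by (simp add: abs_mult)
  have "b - c \<le> w * (b - a)" using assms(1) by (simp add: algebra_simps)
  moreover have "0 \<le> w * (b - a)" using assms by simp
  ultimately show ?thesis using e assms(4) by simp
qed

context
  fixes T :: real
    and Pset :: "(real \<Rightarrow> 'd::euclidean_space) measure set"
    and Et :: "real \<Rightarrow> ((real \<Rightarrow> 'd) \<Rightarrow> real) \<Rightarrow> (real \<Rightarrow> 'd) \<Rightarrow> real"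
    and Etil :: "((real \<Rightarrow> 'd) \<Rightarrow> real) \<Rightarrow> real"
    and P :: "(real \<Rightarrow> 'd) measure" and t :: real
  assumes T_pos: "T > 0"
    and Pset_ne: "Pset \<noteq> {}"
    and Pset_prob: "\<And>Q. Q \<in> Pset \<Longrightarrow> prob_space Q \<and> space Q = paths T \<and> sets Q = sets (filt T T)"
    and Et_range: "\<And>s X. s \<in> {0..T} \<Longrightarrow> X \<in> L1G Pset T T \<Longrightarrow> Et s X \<in> L1G Pset T s"
    and Et_mono: "\<And>s X Y. s \<in> {0..T} \<Longrightarrow> X \<in> L1G Pset T T \<Longrightarrow> Y \<in> L1G Pset T T \<Longrightarrow>
        qs Pset (\<lambda>\<omega>. X \<omega> \<le> Y \<omega>) \<Longrightarrow> qs Pset (\<lambda>\<omega>. Et s X \<omega> \<le> Et s Y \<omega>)"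
    and Et_const: "\<And>s c. s \<in> {0..T} \<Longrightarrow> qs Pset (\<lambda>\<omega>. Et s (\<lambda>_. c) \<omega> = c)"
    and Et_transl: "\<And>s X Y. s \<in> {0..T} \<Longrightarrow> X \<in> L1G Pset T T \<Longrightarrow> Y \<in> L1G Pset T s \<Longrightarrow>
        qs Pset (\<lambda>\<omega>. Et s (\<lambda>\<omega>'. X \<omega>' + Y \<omega>') \<omega> = Et s X \<omega> + Y \<omega>)"
    and Et_convex: "\<And>s X Y w. s \<in> {0..T} \<Longrightarrow> X \<in> L1G Pset T T \<Longrightarrow> Y \<in> L1G Pset T T \<Longrightarrow>
        w \<in> L1G Pset T s \<Longrightarrow> (\<forall>\<omega>. 0 \<le> w \<omega> \<and> w \<omega> \<le> 1) \<Longrightarrow>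
        (\<lambda>\<omega>. w \<omega> * X \<omega> + (1 - w \<omega>) * Y \<omega>) \<in> L1G Pset T T \<Longrightarrow>
        qs Pset (\<lambda>\<omega>. Et s (\<lambda>\<omega>'. w \<omega>' * X \<omega>' + (1 - w \<omega>') * Y \<omega>') \<omega>
                     \<le> w \<omega> * Et s X \<omega> + (1 - w \<omega>) * Et s Y \<omega>)"
    and Et_tower: "\<And>r s X. 0 \<le> r \<Longrightarrow> r \<le> s \<Longrightarrow> s \<le> T \<Longrightarrow> X \<in> L1G Pset T T \<Longrightarrow>
        qs Pset (\<lambda>\<omega>. Et r (Et s X) \<omega> = Et r X \<omega>)"
    and Etil_Et0: "\<And>X. X \<in> L1G Pset T T \<Longrightarrow> qs Pset (\<lambda>\<omega>. Et 0 X \<omega> = Etil X)"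
    and Etil_cons: "\<And>s X. s \<in> {0..T} \<Longrightarrow> X \<in> L1G Pset T T \<Longrightarrow> Etil (Et s X) = Etil X"
    and Etil_dom: "\<And>X Y. X \<in> L1G Pset T T \<Longrightarrow> Y \<in> L1G Pset T T \<Longrightarrow>
        ereal (Etil X - Etil Y) \<le> Ehat Pset (\<lambda>\<omega>. X \<omega> - Y \<omega>)"
    and P_in: "P \<in> Pset"
    and t_in: "t \<in> {0..T}"
begin

lemma Pp: "prob_space P" and spP: "space P = paths T" and setsP: "sets P = sets (filt T T)"
  using Pset_prob[OF P_in] by auto

lemma t0: "0 \<le> t" and tT: "t \<le> T" and T0: "0 \<le> T" using t_in by auto

lemma subalg: "subalgebra P (filt T t)"
  by (rule subalg_filt[OF setsP spP tT])

lemma sfs: "sigma_finite_subalgebra P (filt T t)"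
proof -
  have "finite_measure (restr_to_subalg P (filt T t))"
    by (rule finite_measure_restr_to_subalg[OF subalg]) (use Pp in \<open>simp add: prob_space_def\<close>)
  then interpret finite_measure "restr_to_subalg P (filt T t)" .
  have "sigma_finite_measure (restr_to_subalg P (filt T t))" by (rule sigma_finite_measure_axioms)
  then show ?thesis unfolding sigma_finite_subalgebra_def using subalg by simp
qed

lemma qsAE: "qs Pset \<Phi> \<Longrightarrow> AE \<omega> in P. \<Phi> \<omega>"
  unfolding qs_def using P_in by blast

lemma L_int: "X \<in> L1G Pset T s \<Longrightarrow> s \<le> T \<Longrightarrow> integrable P X"
  using L1G_integrable[OF Pset_prob P_in] by blast

lemma L_measP: "X \<in> L1G Pset T s \<Longrightarrow> s \<le> T \<Longrightarrow> X \<in> borel_measurable P"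
  using L1G_measQ[OF Pset_prob P_in] by blast

lemma Et_L: "X \<in> L1G Pset T T \<Longrightarrow> Et t X \<in> L1G Pset T t"
  by (rule Et_range[OF t_in])

lemma Et_int: "X \<in> L1G Pset T T \<Longrightarrow> integrable P (Et t X)"
  using L_int[OF Et_L tT] .

lemma Et_measF: "X \<in> L1G Pset T T \<Longrightarrow> Et t X \<in> borel_measurable (filt T t)"
  using L1G_meas[OF Pset_prob] Et_L by blast

lemma ce_int: "X \<in> L1G Pset T T \<Longrightarrow> integrable P (real_cond_exp P (filt T t) X)"
  by (rule sigma_finite_subalgebra.real_cond_exp_int(1)[OF sfs L_int[OF _ order_refl]])

lemma ce_integral: "X \<in> L1G Pset T T \<Longrightarrow> (\<integral>\<omega>. real_cond_exp P (filt T t) X \<omega> \<partial>P) = (\<integral>\<omega>. X \<omega> \<partial>P)"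
  by (rule sigma_finite_subalgebra.real_cond_exp_int(2)[OF sfs L_int[OF _ order_refl]])

lemma fX_measF: assumes "X \<in> L1G Pset T T" shows "fX P T t Et X \<in> borel_measurable (filt T t)"
proof -
  have "(\<lambda>\<omega>. real_cond_exp P (filt T t) X \<omega> - Et t X \<omega>) \<in> borel_measurable (filt T t)"
    by (intro borel_measurable_diff borel_measurable_cond_exp Et_measF[OF assms])
  then show ?thesis unfolding fX_def[abs_def] .
qed

lemma fX_measP: "X \<in> L1G Pset T T \<Longrightarrow> fX P T t Et X \<in> borel_measurable P"
  by (rule measurable_from_subalg[OF subalg fX_measF])

lemma fX_int: "X \<in> L1G Pset T T \<Longrightarrow> integrable P (fX P T t Et X)"
  unfolding fX_def by (intro Bochner_Integration.integrable_diff ce_int Et_int)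

lemma fX_integral: "X \<in> L1G Pset T T \<Longrightarrow> (\<integral>\<omega>. fX P T t Et X \<omega> \<partial>P) = (\<integral>\<omega>. X \<omega> \<partial>P) - (\<integral>\<omega>. Et t X \<omega> \<partial>P)"
  unfolding fX_def by (simp only: Bochner_Integration.integral_diff[OF ce_int Et_int] ce_integral)

lemma zero_L: "(\<lambda>_. 0) \<in> L1G Pset T T"
  by (rule L1G_const[OF Pset_prob T0])

lemma fX0: "AE \<omega> in P. fX P T t Et (\<lambda>_. 0) \<omega> = 0"
proof -
  have "AE \<omega> in P. real_cond_exp P (filt T t) (\<lambda>_. 0) \<omega> = 0"
    using sigma_finite_subalgebra.real_cond_exp_F_meas[OF sfs, of "\<lambda>_. 0"] by simp
  moreover have "AE \<omega> in P. Et t (\<lambda>_. 0) \<omega> = 0" by (rule qsAE[OF Et_const[OF t_in, of 0]])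
  ultimately show ?thesis unfolding fX_def by eventually_elim simp
qed


lemma dir:
  assumes X1: "X1 \<in> L1G Pset T T" and X2: "X2 \<in> L1G Pset T T" and e: "e > 0"
  shows "\<exists>X3\<in>L1G Pset T T. (\<integral>\<omega>. max (max (fX P T t Et X1 \<omega>) (fX P T t Et X2 \<omega>) - fX P T t Et X3 \<omega>) 0 \<partial>P) < e"
proof -
  define f1 where "f1 = fX P T t Et X1"
  define f2 where "f2 = fX P T t Et X2"
  have f1F[measurable]: "f1 \<in> borel_measurable (filt T t)" unfolding f1_def by (rule fX_measF[OF X1])
  have f2F[measurable]: "f2 \<in> borel_measurable (filt T t)" unfolding f2_def by (rule fX_measF[OF X2])
  have f1i: "integrable P f1" unfolding f1_def by (rule fX_int[OF X1])
  have f2i: "integrable P f2" unfolding f2_def by (rule fX_int[OF X2])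
  define d where "d \<omega> = \<bar>f1 \<omega> - f2 \<omega>\<bar>" for \<omega>
  have di: "integrable P d" unfolding d_def using f1i f2i by (intro integrable_abs Bochner_Integration.integrable_diff)
  have dnn: "\<And>\<omega>. 0 \<le> d \<omega>" unfolding d_def by simp
  define A where "A = {\<omega> \<in> paths T. f2 \<omega> \<le> f1 \<omega>}"
  have "{\<omega> \<in> space (filt T t). f2 \<omega> \<le> f1 \<omega>} \<in> sets (filt T t)" by measurable
  then have AF: "A \<in> sets (filt T t)" unfolding A_def by simp
  have AP: "A \<in> sets P" using AF subalg unfolding subalgebra_def by blast
  obtain w where w: "w \<in> Wt T t" "err P d A w < e"
    using approx_all[OF Pp spP setsP t0 tT di dnn AF] e unfolding approx_def by blast
  have wl: "lip_cyl T t w" and w01: "\<And>\<omega>. 0 \<le> w \<omega> \<and> w \<omega> \<le> 1" using w(1) unfolding Wt_def by auto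
  have wF[measurable]: "w \<in> borel_measurable (filt T t)" by (rule lip_cyl_meas[OF wl])
  have wP: "w \<in> borel_measurable P" by (rule measurable_from_subalg[OF subalg wF])
  have w1F[measurable]: "(\<lambda>\<omega>. 1 - w \<omega>) \<in> borel_measurable (filt T t)" by measurable
  have w1P: "(\<lambda>\<omega>. 1 - w \<omega>) \<in> borel_measurable P" by (rule measurable_from_subalg[OF subalg w1F])
  define X3 where "X3 = (\<lambda>\<omega>. w \<omega> * X1 \<omega> + (1 - w \<omega>) * X2 \<omega>)"
  have X3L: "X3 \<in> L1G Pset T T" unfolding X3_def
    by (rule L1G_weighted[OF Pset_prob t0 tT wl w01 X1 X2])
  have wL: "w \<in> L1G Pset T t" by (rule lip_cyl_L1G[OF Pset_prob wl])
  have X1i: "integrable P X1" by (rule L_int[OF X1 order_refl])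
  have X2i: "integrable P X2" by (rule L_int[OF X2 order_refl])
  have X1m: "X1 \<in> borel_measurable P" by (rule L_measP[OF X1 order_refl])
  have X2m: "X2 \<in> borel_measurable P" by (rule L_measP[OF X2 order_refl])
  have i1: "integrable P (\<lambda>\<omega>. w \<omega> * X1 \<omega>)" using w01 by (intro wX_int[OF X1i wP]) (simp add: abs_le_iff)
  have i2: "integrable P (\<lambda>\<omega>. (1 - w \<omega>) * X2 \<omega>)" using w01 by (intro wX_int[OF X2i w1P]) (simp add: abs_le_iff)
  have a1: "AE \<omega> in P. real_cond_exp P (filt T t) X3 \<omega> =
      real_cond_exp P (filt T t) (\<lambda>\<omega>. w \<omega> * X1 \<omega>) \<omega> + real_cond_exp P (filt T t) (\<lambda>\<omega>. (1 - w \<omega>) * X2 \<omega>) \<omega>"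
    unfolding X3_def by (rule sigma_finite_subalgebra.real_cond_exp_add[OF sfs i1 i2])
  have a2: "AE \<omega> in P. real_cond_exp P (filt T t) (\<lambda>\<omega>. w \<omega> * X1 \<omega>) \<omega> = w \<omega> * real_cond_exp P (filt T t) X1 \<omega>"
    by (rule sigma_finite_subalgebra.real_cond_exp_mult[OF sfs wF X1m i1])
  have a3: "AE \<omega> in P. real_cond_exp P (filt T t) (\<lambda>\<omega>. (1 - w \<omega>) * X2 \<omega>) \<omega> = (1 - w \<omega>) * real_cond_exp P (filt T t) X2 \<omega>"
    by (rule sigma_finite_subalgebra.real_cond_exp_mult[OF sfs w1F X2m i2])
  have a4: "AE \<omega> in P. Et t X3 \<omega> \<le> w \<omega> * Et t X1 \<omega> + (1 - w \<omega>) * Et t X2 \<omega>"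
    unfolding X3_def by (rule qsAE[OF Et_convex[OF t_in X1 X2 wL _ X3L[unfolded X3_def]]]) (use w01 in blast)
  have key: "AE \<omega> in P. w \<omega> * f1 \<omega> + (1 - w \<omega>) * f2 \<omega> \<le> fX P T t Et X3 \<omega>"
    using a1 a2 a3 a4
  proof eventually_elim
    case (elim \<omega>)
    then show ?case unfolding f1_def f2_def fX_def by (simp add: algebra_simps)
  qed
  have f3i: "integrable P (fX P T t Et X3)" by (rule fX_int[OF X3L])
  have lhs_i: "integrable P (\<lambda>\<omega>. max (max (f1 \<omega>) (f2 \<omega>) - fX P T t Et X3 \<omega>) 0)"
    using f1i f2i f3i by (intro integrable_max Bochner_Integration.integrable_diff) auto
  have ind_w: "\<bar>\<bar>indicator A \<omega> - w \<omega>\<bar>\<bar> \<le> 1" for \<omega>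
    using abs01[OF ind01 w01[of \<omega>], of A] by simp
  have rhs_i: "integrable P (\<lambda>\<omega>. \<bar>indicator A \<omega> - w \<omega>\<bar> * d \<omega>)"
    by (rule wX_int[OF di _ ind_w]) (use AP wP in measurable)
  have "(\<integral>\<omega>. max (max (f1 \<omega>) (f2 \<omega>) - fX P T t Et X3 \<omega>) 0 \<partial>P) \<le> (\<integral>\<omega>. \<bar>indicator A \<omega> - w \<omega>\<bar> * d \<omega> \<partial>P)"
  proof (rule integral_mono_AE[OF lhs_i rhs_i])
    show "AE \<omega> in P. max (max (f1 \<omega>) (f2 \<omega>) - fX P T t Et X3 \<omega>) 0 \<le> \<bar>indicator A \<omega> - w \<omega>\<bar> * d \<omega>"
      using key
    proof (rule AE_mp[OF _ AE_I2[rule_format]], intro impI)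
      fix \<omega> assume \<omega>: "\<omega> \<in> space P" and k: "w \<omega> * f1 \<omega> + (1 - w \<omega>) * f2 \<omega> \<le> fX P T t Et X3 \<omega>"
      show "max (max (f1 \<omega>) (f2 \<omega>) - fX P T t Et X3 \<omega>) 0 \<le> \<bar>indicator A \<omega> - w \<omega>\<bar> * d \<omega>"
      proof (cases "f2 \<omega> \<le> f1 \<omega>")
        case True
        then have "\<omega> \<in> A" using \<omega> spP unfolding A_def by auto
        then show ?thesis using pt_alg1[OF k _ _ True] w01[of \<omega>] unfolding d_def by simp
      next
        case False
        then have "\<omega> \<notin> A" unfolding A_def by auto
        then show ?thesis using pt_alg2[OF k, of] False w01[of \<omega>] unfolding d_def by simp
      qed
    qed
  qed
  also have "\<dots> = err P d A w" unfolding err_def ..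
  finally show ?thesis using w(2) X3L unfolding f1_def f2_def by (intro bexI[of _ X3]) auto
qed


lemma max_pos_le: "max (max (g::real) f2 - f3) 0 \<le> max (max fY f2 - f3) 0 + max (g - fY) 0"
  by (simp add: max_def)

lemma dir_iter:
  fixes z :: "nat \<Rightarrow> (real \<Rightarrow> 'd) \<Rightarrow> real"
  assumes zI: "\<And>n. z n \<in> L1G Pset T T"
  shows "e > 0 \<Longrightarrow> \<exists>X\<in>L1G Pset T T. (\<integral>\<omega>. max (Max ((\<lambda>i. fX P T t Et (z i) \<omega>) ` {..n}) - fX P T t Et X \<omega>) 0 \<partial>P) < e"
    and "integrable P (\<lambda>\<omega>. Max ((\<lambda>i. fX P T t Et (z i) \<omega>) ` {..n}))"
proof -
  define g where "g n \<omega> = Max ((\<lambda>i. fX P T t Et (z i) \<omega>) ` {..n})" for n \<omega>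
  have g0: "g 0 \<omega> = fX P T t Et (z 0) \<omega>" for \<omega> unfolding g_def by simp
  have gS: "g (Suc n) \<omega> = max (fX P T t Et (z (Suc n)) \<omega>) (g n \<omega>)" for n \<omega>
    unfolding g_def by (simp add: atMost_Suc Max_insert)
  have gi: "integrable P (g n)" for n
  proof (induction n)
    case 0 then show ?case using fX_int[OF zI[of 0]] by (simp add: g0[abs_def])
  next
    case (Suc n) then show ?case using fX_int[OF zI[of "Suc n"]] by (simp add: gS[abs_def])
  qed
  then show "integrable P (\<lambda>\<omega>. Max ((\<lambda>i. fX P T t Et (z i) \<omega>) ` {..n}))" unfolding g_def[abs_def] .
  have "\<And>e. e > 0 \<Longrightarrow> \<exists>X\<in>L1G Pset T T. (\<integral>\<omega>. max (g n \<omega> - fX P T t Et X \<omega>) 0 \<partial>P) < e"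
  proof (induction n)
    case 0
    show ?case using 0 zI[of 0] by (intro bexI[of _ "z 0"]) (auto simp: g0)
  next
    case (Suc n)
    have e2: "e/2 > 0" using Suc.prems by simp
    obtain Y where Y: "Y \<in> L1G Pset T T" "(\<integral>\<omega>. max (g n \<omega> - fX P T t Et Y \<omega>) 0 \<partial>P) < e/2"
      using Suc.IH[OF e2] by blast
    obtain X where X: "X \<in> L1G Pset T T"
      "(\<integral>\<omega>. max (max (fX P T t Et Y \<omega>) (fX P T t Et (z (Suc n)) \<omega>) - fX P T t Et X \<omega>) 0 \<partial>P) < e/2"
      using dir[OF Y(1) zI[of "Suc n"] e2] by blast
    have i1: "integrable P (\<lambda>\<omega>. max (max (fX P T t Et Y \<omega>) (fX P T t Et (z (Suc n)) \<omega>) - fX P T t Et X \<omega>) 0)"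
      using fX_int[OF Y(1)] fX_int[OF zI[of "Suc n"]] fX_int[OF X(1)]
      by (intro integrable_max Bochner_Integration.integrable_diff) auto
    have i2: "integrable P (\<lambda>\<omega>. max (g n \<omega> - fX P T t Et Y \<omega>) 0)"
      using gi[of n] fX_int[OF Y(1)] by (intro integrable_max Bochner_Integration.integrable_diff) auto
    have i3: "integrable P (\<lambda>\<omega>. max (g (Suc n) \<omega> - fX P T t Et X \<omega>) 0)"
      using gi[of "Suc n"] fX_int[OF X(1)] by (intro integrable_max Bochner_Integration.integrable_diff) auto
    have "(\<integral>\<omega>. max (g (Suc n) \<omega> - fX P T t Et X \<omega>) 0 \<partial>P) \<le>
       (\<integral>\<omega>. max (max (fX P T t Et Y \<omega>) (fX P T t Et (z (Suc n)) \<omega>) - fX P T t Et X \<omega>) 0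
            + max (g n \<omega> - fX P T t Et Y \<omega>) 0 \<partial>P)"
    proof (rule integral_mono[OF i3 Bochner_Integration.integrable_add[OF i1 i2]])
      fix \<omega>
      show "max (g (Suc n) \<omega> - fX P T t Et X \<omega>) 0 \<le>
        max (max (fX P T t Et Y \<omega>) (fX P T t Et (z (Suc n)) \<omega>) - fX P T t Et X \<omega>) 0 + max (g n \<omega> - fX P T t Et Y \<omega>) 0"
        unfolding gS by (simp add: max_def)
    qed
    also have "\<dots> = (\<integral>\<omega>. max (max (fX P T t Et Y \<omega>) (fX P T t Et (z (Suc n)) \<omega>) - fX P T t Et X \<omega>) 0 \<partial>P)
            + (\<integral>\<omega>. max (g n \<omega> - fX P T t Et Y \<omega>) 0 \<partial>P)"
      by (rule Bochner_Integration.integral_add[OF i1 i2])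
    also have "\<dots> < e" using X(2) Y(2) by simp
    finally show ?case using X(1) by blast
  qed
  then show "e > 0 \<Longrightarrow> \<exists>X\<in>L1G Pset T T. (\<integral>\<omega>. max (Max ((\<lambda>i. fX P T t Et (z i) \<omega>) ` {..n}) - fX P T t Et X \<omega>) 0 \<partial>P) < e"
    unfolding g_def .
qed


lemma fX_measN: "X \<in> L1G Pset T T \<Longrightarrow> fX P T t Et X \<in> borel_measurable (restr_to_subalg P (filt T t))"
  using fX_measF measurable_cong_sets[OF sets_restr_to_subalg[OF subalg] refl] by blast

lemma S_nonneg: "0 \<le> (SUP X\<in>L1G Pset T T. ereal (\<integral>\<omega>. fX P T t Et X \<omega> \<partial>P))"
proof -
  have "(\<integral>\<omega>. fX P T t Et (\<lambda>_. 0) \<omega> \<partial>P) = 0" by (rule integral_eq_zero_AE[OF fX0])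
  then have "ereal 0 \<le> ereal (\<integral>\<omega>. fX P T t Et (\<lambda>_. 0) \<omega> \<partial>P)" by simp
  also have "\<dots> \<le> (SUP X\<in>L1G Pset T T. ereal (\<integral>\<omega>. fX P T t Et X \<omega> \<partial>P))"
    using zero_L by (rule SUP_upper)
  finally show ?thesis by (simp add: zero_ereal_def)
qed

lemma partA:
  "exp_ereal P (alphaT Pset T Et t P) = (SUP X\<in>L1G Pset T T. ereal (\<integral>\<omega>. fX P T t Et X \<omega> \<partial>P))"
proof -
  define I where "I = L1G Pset T T"
  define N where "N = restr_to_subalg P (filt T t)"
  define S where "S = (SUP X\<in>I. ereal (\<integral>\<omega>. fX P T t Et X \<omega> \<partial>P))"
  define f where "f = fX P T t Et"
  have S0: "0 \<le> S" using S_nonneg unfolding S_def I_def .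
  have Np: "prob_space N" unfolding N_def by (rule prob_space_restr_to_subalg[OF subalg Pp])
  have fN: "\<And>X. X \<in> I \<Longrightarrow> f X \<in> borel_measurable N" unfolding N_def I_def f_def by (rule fX_measN)
  obtain z :: "nat \<Rightarrow> (real \<Rightarrow> 'd) \<Rightarrow> real" where zI: "range z \<subseteq> I" and zdom: "\<forall>X\<in>I. AE \<omega> in N. ereal (f X \<omega>) \<le> (SUP n. ereal (f (z n) \<omega>))"
  proof -
    have "I \<noteq> {}" using zero_L unfolding I_def by blast
    from countable_dominating[of N I f, OF Np this fN] show ?thesis using that by blast
  qed
  define z' where "z' = case_nat (\<lambda>_::real \<Rightarrow> 'd. 0::real) z"
  have z'I: "z' n \<in> I" for n using zI zero_L unfolding z'_def I_def by (cases n) auto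
  define Zc where "Zc \<omega> = (SUP n. ereal (f (z' n) \<omega>))" for \<omega>
  have ZcN: "Zc \<in> borel_measurable N" unfolding Zc_def using fN[OF z'I] by measurable
  have leZ: "(SUP n. ereal (f (z n) \<omega>)) \<le> Zc \<omega>" for \<omega>
    unfolding Zc_def z'_def by (intro SUP_least) (metis SUP_upper UNIV_I old.nat.simps(5))
  have dom: "AE \<omega> in N. ereal (f X \<omega>) \<le> Zc \<omega>" if "X \<in> I" for X
  proof -
    have "AE \<omega> in N. ereal (f X \<omega>) \<le> (SUP n. ereal (f (z n) \<omega>))" using zdom that by blast
    then show ?thesis by (rule eventually_mono) (rule order_trans[OF _ leZ])
  qed
  define Fam where "Fam = {(\<lambda>\<omega>. ereal (real_cond_exp P (filt T t) Y \<omega> - Et t Y \<omega>)) | Y. Y \<in> L1G Pset T T}"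
  have Fam_eq: "Fam = (\<lambda>X \<omega>. ereal (f X \<omega>)) ` I" unfolding Fam_def I_def f_def fX_def by auto
  have ess: "is_ess_sup N Fam Zc"
    unfolding is_ess_sup_def
  proof (intro conjI ballI impI)
    show "Zc \<in> borel_measurable N" by (rule ZcN)
  next
    fix g assume "g \<in> Fam"
    then obtain X where "X \<in> I" "g = (\<lambda>\<omega>. ereal (f X \<omega>))" unfolding Fam_eq by auto
    then show "AE x in N. g x \<le> Zc x" using dom by simp
  next
    fix Z' assume Z': "Z' \<in> borel_measurable N" "\<forall>g\<in>Fam. AE x in N. g x \<le> Z' x"
    have "AE x in N. ereal (f (z' n) x) \<le> Z' x" for n using Z'(2) z'I unfolding Fam_eq by auto
    then have "AE x in N. \<forall>n. ereal (f (z' n) x) \<le> Z' x" by (simp add: AE_all_countable)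
    then show "AE x in N. Zc x \<le> Z' x" unfolding Zc_def by (rule eventually_mono) (rule SUP_least, blast)
  qed
  define Z where "Z = ess_sup_fam N Fam"
  have essZ: "is_ess_sup N Fam Z" unfolding Z_def ess_sup_fam_def by (rule someI[of "is_ess_sup N Fam", OF ess])
  have "AE \<omega> in N. Z \<omega> \<le> Zc \<omega>" using essZ ess unfolding is_ess_sup_def by blast
  moreover have "AE \<omega> in N. Zc \<omega> \<le> Z \<omega>" using essZ ess unfolding is_ess_sup_def by blast
  ultimately have "AE \<omega> in N. Z \<omega> = Zc \<omega>" by eventually_elim simp
  then have ZZc: "AE \<omega> in P. Z \<omega> = Zc \<omega>" unfolding N_def by (rule AE_restr_to_subalg[OF subalg])
  have alpha: "alphaT Pset T Et t P = Z" unfolding alphaT_def Z_def N_def Fam_def ..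
  have expZ: "exp_ereal P Z = enn2ereal (\<integral>\<^sup>+\<omega>. e2ennreal (Zc \<omega>) \<partial>P)"
    unfolding exp_ereal_def using ZZc by (intro arg_cong[where f=enn2ereal] nn_integral_cong_AE) auto
  have fP: "f X \<in> borel_measurable P" if "X \<in> I" for X using fX_measP that unfolding f_def I_def by blast
  have fi: "integrable P (f X)" if "X \<in> I" for X using fX_int that unfolding f_def I_def by blast
  have domP: "AE \<omega> in P. ereal (f X \<omega>) \<le> Zc \<omega>" if "X \<in> I" for X
    using dom[OF that] unfolding N_def by (rule AE_restr_to_subalg[OF subalg])
  have f0: "AE \<omega> in P. f (z' 0) \<omega> = 0" unfolding z'_def f_def using fX0 by simp
  have Zc0: "AE \<omega> in P. 0 \<le> Zc \<omega>" using domP[OF z'I[of 0]] f0 by eventually_elim (simp add: zero_ereal_def)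
  have ZcP: "Zc \<in> borel_measurable P" unfolding Zc_def using fP[OF z'I] by measurable
  have lower: "ereal (\<integral>\<omega>. f X \<omega> \<partial>P) \<le> enn2ereal (\<integral>\<^sup>+\<omega>. e2ennreal (Zc \<omega>) \<partial>P)" if X: "X \<in> I" for X
  proof -
    have im: "integrable P (\<lambda>\<omega>. max (f X \<omega>) 0)" using fi[OF X] by auto
    have "(\<integral>\<omega>. f X \<omega> \<partial>P) \<le> (\<integral>\<omega>. max (f X \<omega>) 0 \<partial>P)"
      using fi[OF X] im by (intro integral_mono) auto
    moreover have "ennreal (\<integral>\<omega>. max (f X \<omega>) 0 \<partial>P) = (\<integral>\<^sup>+\<omega>. ennreal (max (f X \<omega>) 0) \<partial>P)"
      using im by (intro nn_integral_eq_integral[symmetric]) auto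
    moreover have "(\<integral>\<^sup>+\<omega>. ennreal (max (f X \<omega>) 0) \<partial>P) \<le> (\<integral>\<^sup>+\<omega>. e2ennreal (Zc \<omega>) \<partial>P)"
    proof (rule nn_integral_mono_AE)
      show "AE \<omega> in P. ennreal (max (f X \<omega>) 0) \<le> e2ennreal (Zc \<omega>)"
        using domP[OF X] Zc0
      proof eventually_elim
        case (elim \<omega>)
        then have "ereal (max (f X \<omega>) 0) \<le> Zc \<omega>" by (auto simp: max_def zero_ereal_def)
        then have "e2ennreal (ereal (max (f X \<omega>) 0)) \<le> e2ennreal (Zc \<omega>)" by (rule e2ennreal_mono)
        then show ?case by (simp only: e2ennreal_ereal)
      qed
    qed
    ultimately have "ennreal (\<integral>\<omega>. max (f X \<omega>) 0 \<partial>P) \<le> (\<integral>\<^sup>+\<omega>. e2ennreal (Zc \<omega>) \<partial>P)" by simp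
    then have "enn2ereal (ennreal (\<integral>\<omega>. max (f X \<omega>) 0 \<partial>P)) \<le> enn2ereal (\<integral>\<^sup>+\<omega>. e2ennreal (Zc \<omega>) \<partial>P)"
      by (simp add: less_eq_ennreal.rep_eq)
    moreover have "0 \<le> (\<integral>\<omega>. max (f X \<omega>) 0 \<partial>P)" by (intro integral_nonneg_AE) auto
    ultimately have "ereal (\<integral>\<omega>. max (f X \<omega>) 0 \<partial>P) \<le> enn2ereal (\<integral>\<^sup>+\<omega>. e2ennreal (Zc \<omega>) \<partial>P)" by simp
    moreover note \<open>(\<integral>\<omega>. f X \<omega> \<partial>P) \<le> (\<integral>\<omega>. max (f X \<omega>) 0 \<partial>P)\<close>
    ultimately show ?thesis using order_trans[of "ereal (\<integral>\<omega>. f X \<omega> \<partial>P)" "ereal (\<integral>\<omega>. max (f X \<omega>) 0 \<partial>P)"] by simp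
  qed
  have ge: "S \<le> enn2ereal (\<integral>\<^sup>+\<omega>. e2ennreal (Zc \<omega>) \<partial>P)"
    unfolding S_def using lower unfolding f_def by (intro SUP_least) auto
  define g where "g n \<omega> = Max ((\<lambda>i. fX P T t Et (z' i) \<omega>) ` {..n})" for n \<omega>
  have gi: "integrable P (g n)" for n
    using dir_iter(2)[of z' n] z'I unfolding g_def[abs_def] I_def by blast
  have gP: "g n \<in> borel_measurable P" for n using gi by (rule borel_measurable_integrable)
  have g_ge: "f (z' i) \<omega> \<le> g n \<omega>" if "i \<le> n" for i n \<omega>
    unfolding g_def f_def using that by (intro Max_ge) auto
  have g_in: "\<exists>i. g n \<omega> = f (z' i) \<omega>" for n \<omega>
  proof -
    have "g n \<omega> \<in> (\<lambda>i. fX P T t Et (z' i) \<omega>) ` {..n}" unfolding g_def by (intro Max_in) auto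
    then show ?thesis unfolding f_def by auto
  qed
  have g_mono: "g n \<omega> \<le> g (Suc n) \<omega>" for n \<omega>
    unfolding g_def by (intro Max_mono) auto
  have Zc_g: "Zc \<omega> = (SUP n. ereal (g n \<omega>))" for \<omega>
  proof (rule antisym)
    show "Zc \<omega> \<le> (SUP n. ereal (g n \<omega>))" unfolding Zc_def
    proof (rule SUP_least)
      fix n
      have "ereal (f (z' n) \<omega>) \<le> ereal (g n \<omega>)" using g_ge[of n n \<omega>] by simp
      also have "\<dots> \<le> (SUP n. ereal (g n \<omega>))" by (rule SUP_upper) simp
      finally show "ereal (f (z' n) \<omega>) \<le> (SUP n. ereal (g n \<omega>))" .
    qed
    show "(SUP n. ereal (g n \<omega>)) \<le> Zc \<omega>" unfolding Zc_def
    proof (intro SUP_least)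
      fix n obtain i where "g n \<omega> = f (z' i) \<omega>" using g_in by blast
      then show "ereal (g n \<omega>) \<le> (SUP n. ereal (f (z' n) \<omega>))" by (metis SUP_upper UNIV_I)
    qed
  qed
  have inc: "incseq (\<lambda>n. g n \<omega>)" for \<omega> using g_mono by (rule incseq_SucI)
  have e2Zc: "e2ennreal (Zc \<omega>) = (SUP n. ennreal (g n \<omega>))" for \<omega>
  proof -
    have "mono (\<lambda>n. ereal (g n \<omega>))" using inc[of \<omega>] unfolding incseq_def mono_def by simp
    then have "e2ennreal (SUP n. ereal (g n \<omega>)) = (SUP n. e2ennreal (ereal (g n \<omega>)))"
      by (rule sup_continuousD[OF sup_continuous_e2ennreal[OF sup_continuous_id]])
    then show ?thesis unfolding Zc_g by simp
  qed
  have "(\<integral>\<^sup>+\<omega>. e2ennreal (Zc \<omega>) \<partial>P) = (SUP n. \<integral>\<^sup>+\<omega>. ennreal (g n \<omega>) \<partial>P)"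
    unfolding e2Zc
  proof (rule nn_integral_monotone_convergence_SUP)
    show "incseq (\<lambda>n \<omega>. ennreal (g n \<omega>))" using inc by (auto simp: incseq_def le_fun_def ennreal_leI)
    show "(\<lambda>\<omega>. ennreal (g n \<omega>)) \<in> borel_measurable P" for n using gP by measurable
  qed
  also have "\<dots> \<le> e2ennreal S"
  proof (rule SUP_least)
    fix n
    have gnn: "AE \<omega> in P. 0 \<le> g n \<omega>" using f0
    proof (rule eventually_mono)
      fix \<omega> assume "f (z' 0) \<omega> = 0" then show "0 \<le> g n \<omega>" using g_ge[of 0 n \<omega>] by simp
    qed
    have eq: "(\<integral>\<^sup>+\<omega>. ennreal (g n \<omega>) \<partial>P) = ennreal (\<integral>\<omega>. g n \<omega> \<partial>P)"
      by (rule nn_integral_eq_integral[OF gi gnn])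
    have int0: "0 \<le> (\<integral>\<omega>. g n \<omega> \<partial>P)" by (rule integral_nonneg_AE[OF gnn])
    have "ereal (\<integral>\<omega>. g n \<omega> \<partial>P) \<le> S"
    proof (rule ereal_le_epsilon2)
      fix e :: real assume e: "0 < e"
      obtain X where X: "X \<in> I" "(\<integral>\<omega>. max (g n \<omega> - f X \<omega>) 0 \<partial>P) < e"
        using dir_iter(1)[of z' e n] z'I e unfolding g_def[abs_def] I_def f_def by blast
      have i1: "integrable P (\<lambda>\<omega>. max (g n \<omega> - f X \<omega>) 0)" using gi fi[OF X(1)] by auto
      have "(\<integral>\<omega>. g n \<omega> \<partial>P) \<le> (\<integral>\<omega>. f X \<omega> + max (g n \<omega> - f X \<omega>) 0 \<partial>P)"
        using gi fi[OF X(1)] i1 by (intro integral_mono) auto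
      also have "\<dots> = (\<integral>\<omega>. f X \<omega> \<partial>P) + (\<integral>\<omega>. max (g n \<omega> - f X \<omega>) 0 \<partial>P)"
        by (rule Bochner_Integration.integral_add[OF fi[OF X(1)] i1])
      finally have "ereal (\<integral>\<omega>. g n \<omega> \<partial>P) \<le> ereal (\<integral>\<omega>. f X \<omega> \<partial>P) + ereal e" using X(2) by simp
      also have "ereal (\<integral>\<omega>. f X \<omega> \<partial>P) \<le> S" unfolding S_def f_def using X(1) by (rule SUP_upper)
      finally show "ereal (\<integral>\<omega>. g n \<omega> \<partial>P) \<le> S + ereal e" by (simp add: add_right_mono)
    qed
    then have "e2ennreal (ereal (\<integral>\<omega>. g n \<omega> \<partial>P)) \<le> e2ennreal S" by (rule e2ennreal_mono)
    then show "(\<integral>\<^sup>+\<omega>. ennreal (g n \<omega>) \<partial>P) \<le> e2ennreal S" using eq by simp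
  qed
  finally have "enn2ereal (\<integral>\<^sup>+\<omega>. e2ennreal (Zc \<omega>) \<partial>P) \<le> enn2ereal (e2ennreal S)"
    by (simp add: less_eq_ennreal.rep_eq)
  then have le: "enn2ereal (\<integral>\<^sup>+\<omega>. e2ennreal (Zc \<omega>) \<partial>P) \<le> S" using S0 by (simp add: enn2ereal_e2ennreal)
  show ?thesis unfolding alpha expZ using le ge unfolding S_def I_def by simp
qed


lemma Etil0: "Etil (\<lambda>_. 0) = 0"
proof -
  have "AE \<omega> in P. Et 0 (\<lambda>_. 0) \<omega> = Etil (\<lambda>_. 0)" by (rule qsAE[OF Etil_Et0[OF zero_L]])
  moreover have "AE \<omega> in P. Et 0 (\<lambda>_. 0) \<omega> = 0" by (rule qsAE[OF Et_const[of 0 0]]) (use T0 in simp)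
  ultimately have "AE \<omega> in P. Etil (\<lambda>_. 0) = 0" by eventually_elim simp
  then show ?thesis using prob_space.AE_const[OF Pp] by blast
qed

lemma Etil_le:
  assumes X: "X \<in> L1G Pset T T" and Y: "Y \<in> L1G Pset T T" and q: "qs Pset (\<lambda>\<omega>. X \<omega> = Y \<omega>)"
  shows "Etil X \<le> Etil Y"
proof -
  have "Ehat Pset (\<lambda>\<omega>. X \<omega> - Y \<omega>) = (SUP Q\<in>Pset. ereal 0)"
    unfolding Ehat_def
  proof (rule SUP_cong[OF refl])
    fix Q assume Q: "Q \<in> Pset"
    have "AE \<omega> in Q. X \<omega> - Y \<omega> = 0" using q Q unfolding qs_def by auto
    then show "ereal (\<integral>\<omega>. X \<omega> - Y \<omega> \<partial>Q) = ereal 0" by (simp add: integral_eq_zero_AE)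
  qed
  also have "\<dots> = 0" using Pset_ne by (simp add: zero_ereal_def)
  finally have "ereal (Etil X - Etil Y) \<le> 0" using Etil_dom[OF X Y] by simp
  then show ?thesis by (simp add: zero_ereal_def)
qed

lemma Etil_cong:
  assumes X: "X \<in> L1G Pset T T" and Y: "Y \<in> L1G Pset T T" and q: "qs Pset (\<lambda>\<omega>. X \<omega> = Y \<omega>)"
  shows "Etil X = Etil Y"
proof -
  have q': "qs Pset (\<lambda>\<omega>. Y \<omega> = X \<omega>)" using q unfolding qs_def by (auto elim: eventually_mono)
  show ?thesis using Etil_le[OF X Y q] Etil_le[OF Y X q'] by simp
qed

lemma qs_conj: "qs Pset A \<Longrightarrow> qs Pset B \<Longrightarrow> qs Pset (\<lambda>\<omega>. A \<omega> \<and> B \<omega>)"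
  unfolding qs_def by (auto elim: eventually_elim2)

lemma qs_mono: "qs Pset A \<Longrightarrow> (\<And>\<omega>. A \<omega> \<Longrightarrow> B \<omega>) \<Longrightarrow> qs Pset B"
  unfolding qs_def by (auto elim: eventually_mono)

lemma partB:
  "alpha0 Pset T Etil T P = alpha0 Pset T Etil t P + (SUP X\<in>L1G Pset T T. ereal (\<integral>\<omega>. fX P T t Et X \<omega> \<partial>P))"
proof -
  define I where "I = L1G Pset T T"
  define S where "S = (SUP X\<in>I. ereal (\<integral>\<omega>. fX P T t Et X \<omega> \<partial>P))"
  have S0: "0 \<le> S" using S_nonneg unfolding S_def I_def .
  have LtT: "Y \<in> L1G Pset T t \<Longrightarrow> Y \<in> I" for Y unfolding I_def by (rule L1G_mono[OF Pset_prob tT])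
  have A0t0: "0 \<le> alpha0 Pset T Etil t P"
  proof -
    have z: "(\<lambda>_. 0) \<in> L1G Pset T t" by (rule L1G_const[OF Pset_prob t0])
    have "ereal ((\<integral>\<omega>. 0 \<partial>P) - Etil (\<lambda>_. 0)) \<le> alpha0 Pset T Etil t P"
      unfolding alpha0_def using z by (rule SUP_upper)
    then show ?thesis using Etil0 by (simp add: zero_ereal_def)
  qed
  have le: "alpha0 Pset T Etil T P \<le> alpha0 Pset T Etil t P + S"
    unfolding alpha0_def[of _ _ _ T]
  proof (rule SUP_least)
    fix X assume X: "X \<in> L1G Pset T T"
    have EtL: "Et t X \<in> L1G Pset T t" by (rule Et_L[OF X])
    have eq: "(\<integral>\<omega>. X \<omega> \<partial>P) - Etil X = ((\<integral>\<omega>. Et t X \<omega> \<partial>P) - Etil (Et t X)) + (\<integral>\<omega>. fX P T t Et X \<omega> \<partial>P)"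
      using fX_integral[OF X] Etil_cons[OF t_in X] by simp
    have "ereal ((\<integral>\<omega>. Et t X \<omega> \<partial>P) - Etil (Et t X)) \<le> alpha0 Pset T Etil t P"
      unfolding alpha0_def using EtL by (rule SUP_upper)
    moreover have "ereal (\<integral>\<omega>. fX P T t Et X \<omega> \<partial>P) \<le> S" unfolding S_def I_def using X by (rule SUP_upper)
    ultimately have "ereal ((\<integral>\<omega>. Et t X \<omega> \<partial>P) - Etil (Et t X)) + ereal (\<integral>\<omega>. fX P T t Et X \<omega> \<partial>P)
        \<le> alpha0 Pset T Etil t P + S" by (rule add_mono)
    then show "ereal ((\<integral>\<omega>. X \<omega> \<partial>P) - Etil X) \<le> alpha0 Pset T Etil t P + S" unfolding eq by simp
  qed
  have ge: "alpha0 Pset T Etil t P + S \<le> alpha0 Pset T Etil T P"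
  proof -
    have ne: "L1G Pset T t \<noteq> {}" using L1G_const[OF Pset_prob t0] by blast
    have "alpha0 Pset T Etil t P + S = (SUP Y\<in>L1G Pset T t. ereal ((\<integral>\<omega>. Y \<omega> \<partial>P) - Etil Y) + S)"
      unfolding alpha0_def using ne S0 by (intro SUP_ereal_add_left[symmetric]) auto
    also have "\<dots> \<le> alpha0 Pset T Etil T P"
    proof (rule SUP_least)
      fix Y assume Y: "Y \<in> L1G Pset T t"
      have IneI: "I \<noteq> {}" using zero_L unfolding I_def by blast
      have "ereal ((\<integral>\<omega>. Y \<omega> \<partial>P) - Etil Y) + S = (SUP X\<in>I. ereal (\<integral>\<omega>. fX P T t Et X \<omega> \<partial>P) + ereal ((\<integral>\<omega>. Y \<omega> \<partial>P) - Etil Y))"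
        unfolding S_def using IneI by (subst SUP_ereal_add_left) (auto simp: add.commute)
      also have "\<dots> \<le> alpha0 Pset T Etil T P"
      proof (rule SUP_least)
        fix X assume X: "X \<in> I"
        then have XL: "X \<in> L1G Pset T T" unfolding I_def .
        define mE where "mE = (\<lambda>\<omega>. - Et t X \<omega>)"
        have mEt: "mE \<in> L1G Pset T t" unfolding mE_def by (rule L1G_uminus[OF Pset_prob t0 Et_L[OF XL]])
        define X2 where "X2 = (\<lambda>\<omega>. X \<omega> + mE \<omega>)"
        have mET: "mE \<in> L1G Pset T T" using LtT[OF mEt] unfolding I_def .
        have X2L: "X2 \<in> L1G Pset T T" unfolding X2_def
          using L1G_add[OF Pset_prob, where s=T and X=X and Y=mE] XL mET by simp
        define X3 where "X3 = (\<lambda>\<omega>. X2 \<omega> + Y \<omega>)"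
        have YT: "Y \<in> L1G Pset T T" using LtT[OF Y] unfolding I_def .
        have X3L: "X3 \<in> L1G Pset T T" unfolding X3_def
          using L1G_add[OF Pset_prob, where s=T and X=X2 and Y=Y] X2L YT by simp
        have q1: "qs Pset (\<lambda>\<omega>. Et t X3 \<omega> = Et t X2 \<omega> + Y \<omega>)"
          unfolding X3_def by (rule Et_transl[OF t_in X2L Y])
        have q2: "qs Pset (\<lambda>\<omega>. Et t X2 \<omega> = Et t X \<omega> + mE \<omega>)"
          unfolding X2_def by (rule Et_transl[OF t_in XL mEt])
        have q: "qs Pset (\<lambda>\<omega>. Et t X3 \<omega> = Y \<omega>)"
          by (rule qs_mono[OF qs_conj[OF q1 q2]]) (simp add: mE_def)
        have EX3: "Et t X3 \<in> L1G Pset T T" using LtT[OF Et_L[OF X3L]] unfolding I_def .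
        have Etil3: "Etil X3 = Etil Y"
          using Etil_cons[OF t_in X3L] Etil_cong[OF EX3 LtT[OF Y, unfolded I_def] q] by simp
        have Xi: "integrable P X" by (rule L_int[OF XL order_refl])
        have Ei: "integrable P mE" unfolding mE_def using Et_int[OF XL] by simp
        have Yi: "integrable P Y" by (rule L_int[OF Y tT])
        have intX3: "(\<integral>\<omega>. X3 \<omega> \<partial>P) = (\<integral>\<omega>. X \<omega> \<partial>P) - (\<integral>\<omega>. Et t X \<omega> \<partial>P) + (\<integral>\<omega>. Y \<omega> \<partial>P)"
          unfolding X3_def X2_def
          by (simp add: Bochner_Integration.integral_add[OF Bochner_Integration.integrable_add[OF Xi Ei] Yi]
                 Bochner_Integration.integral_add[OF Xi Ei]) (simp add: mE_def)
        have "ereal (\<integral>\<omega>. fX P T t Et X \<omega> \<partial>P) + ereal ((\<integral>\<omega>. Y \<omega> \<partial>P) - Etil Y)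
            = ereal ((\<integral>\<omega>. X3 \<omega> \<partial>P) - Etil X3)"
          using fX_integral[OF XL] intX3 Etil3 by simp
        also have "\<dots> \<le> alpha0 Pset T Etil T P" unfolding alpha0_def using X3L by (rule SUP_upper)
        finally show "ereal (\<integral>\<omega>. fX P T t Et X \<omega> \<partial>P) + ereal ((\<integral>\<omega>. Y \<omega> \<partial>P) - Etil Y) \<le> alpha0 Pset T Etil T P" .
      qed
      finally show "ereal ((\<integral>\<omega>. Y \<omega> \<partial>P) - Etil Y) + S \<le> alpha0 Pset T Etil T P" .
    qed
    finally show ?thesis .
  qed
  show ?thesis using le ge unfolding S_def I_def by (rule antisym)
qed

lemma main:
  shows "exp_ereal P (alphaT Pset T Et t P) =
           (SUP X\<in>L1G Pset T T. ereal (\<integral>\<omega>. (real_cond_exp P (filt T t) X \<omega> - Et t X \<omega>) \<partial>P))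
       \<and> alpha0 Pset T Etil T P = alpha0 Pset T Etil t P + exp_ereal P (alphaT Pset T Et t P)"
  using partA partB unfolding fX_def by simp

end


theorem proposition3p5:
  fixes T :: real
    and Pset :: "(real \<Rightarrow> 'd::euclidean_space) measure set"
    and Et :: "real \<Rightarrow> ((real \<Rightarrow> 'd) \<Rightarrow> real) \<Rightarrow> (real \<Rightarrow> 'd) \<Rightarrow> real"
    and Etil :: "((real \<Rightarrow> 'd) \<Rightarrow> real) \<Rightarrow> real"
    and P :: "(real \<Rightarrow> 'd) measure" and t :: real
  assumes T_pos: "T > 0"
    and Pset_ne: "Pset \<noteq> {}"
    and Pset_prob: "\<And>Q. Q \<in> Pset \<Longrightarrow> prob_space Q \<and> space Q = paths T \<and> sets Q = sets (filt T T)"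
    (* tilde E_t maps L^1_G(Omega_T) into L^1_G(Omega_t) *)
    and Et_range: "\<And>s X. s \<in> {0..T} \<Longrightarrow> X \<in> L1G Pset T T \<Longrightarrow> Et s X \<in> L1G Pset T s"
    (* monotone *)
    and Et_mono: "\<And>s X Y. s \<in> {0..T} \<Longrightarrow> X \<in> L1G Pset T T \<Longrightarrow> Y \<in> L1G Pset T T \<Longrightarrow>
        qs Pset (\<lambda>\<omega>. X \<omega> \<le> Y \<omega>) \<Longrightarrow> qs Pset (\<lambda>\<omega>. Et s X \<omega> \<le> Et s Y \<omega>)"
    (* constant preserving *)
    and Et_const: "\<And>s c. s \<in> {0..T} \<Longrightarrow> qs Pset (\<lambda>\<omega>. Et s (\<lambda>_. c) \<omega> = c)"
    (* translation invariance by F_s-measurable elements *)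
    and Et_transl: "\<And>s X Y. s \<in> {0..T} \<Longrightarrow> X \<in> L1G Pset T T \<Longrightarrow> Y \<in> L1G Pset T s \<Longrightarrow>
        qs Pset (\<lambda>\<omega>. Et s (\<lambda>\<omega>'. X \<omega>' + Y \<omega>') \<omega> = Et s X \<omega> + Y \<omega>)"
    (* conditional convexity *)
    and Et_convex: "\<And>s X Y w. s \<in> {0..T} \<Longrightarrow> X \<in> L1G Pset T T \<Longrightarrow> Y \<in> L1G Pset T T \<Longrightarrow>
        w \<in> L1G Pset T s \<Longrightarrow> (\<forall>\<omega>. 0 \<le> w \<omega> \<and> w \<omega> \<le> 1) \<Longrightarrow>
        (\<lambda>\<omega>. w \<omega> * X \<omega> + (1 - w \<omega>) * Y \<omega>) \<in> L1G Pset T T \<Longrightarrow>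
        qs Pset (\<lambda>\<omega>. Et s (\<lambda>\<omega>'. w \<omega>' * X \<omega>' + (1 - w \<omega>') * Y \<omega>') \<omega>
                     \<le> w \<omega> * Et s X \<omega> + (1 - w \<omega>) * Et s Y \<omega>)"
    (* time consistency *)
    and Et_tower: "\<And>r s X. 0 \<le> r \<Longrightarrow> r \<le> s \<Longrightarrow> s \<le> T \<Longrightarrow> X \<in> L1G Pset T T \<Longrightarrow>
        qs Pset (\<lambda>\<omega>. Et r (Et s X) \<omega> = Et r X \<omega>)"
    (* tilde E = tilde E_0 and consistency tilde E[tilde E_s X] = tilde E[X] *)
    and Etil_Et0: "\<And>X. X \<in> L1G Pset T T \<Longrightarrow> qs Pset (\<lambda>\<omega>. Et 0 X \<omega> = Etil X)"
    and Etil_cons: "\<And>s X. s \<in> {0..T} \<Longrightarrow> X \<in> L1G Pset T T \<Longrightarrow> Etil (Et s X) = Etil X"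
    (* domination by the G-expectation *)
    and Etil_dom: "\<And>X Y. X \<in> L1G Pset T T \<Longrightarrow> Y \<in> L1G Pset T T \<Longrightarrow>
        ereal (Etil X - Etil Y) \<le> Ehat Pset (\<lambda>\<omega>. X \<omega> - Y \<omega>)"
    and P_in: "P \<in> Pset"
    and t_in: "t \<in> {0..T}"
  shows "exp_ereal P (alphaT Pset T Et t P) =
           (SUP X\<in>L1G Pset T T. ereal (\<integral>\<omega>. (real_cond_exp P (filt T t) X \<omega> - Et t X \<omega>) \<partial>P))
       \<and> alpha0 Pset T Etil T P = alpha0 Pset T Etil t P + exp_ereal P (alphaT Pset T Et t P)"
  by (rule main[OF T_pos Pset_ne Pset_prob Et_range Et_mono Et_const Et_transl Et_convex Et_tower Etil_Et0 Etil_cons Etil_dom P_in t_in])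

end
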